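(* Let $\mathfrak{A}$ be a unital $\mathrm{C}^*$-algebra and $\mathfrak{S}\subset\mathfrak{A}$ an operator system. Let $\pi:\mathfrak{A}\to B(\mathcal{H})$ be a unital $*$-representation and $\Pi:\mathfrak{A}\to B(\mathcal{H})$ a unital completely positive map with $\Pi|_{\mathfrak{S}}=\pi|_{\mathfrak{S}}$. Let $\psi$ be a state on $\mathfrak{A}$ admitting a characteristic sequence $(\Delta_n)_n$ with $\Delta_n\in\mathfrak{S}$ for all $n$. Then $\limsup_{n\to\infty}\|\Pi(a)\pi(\Delta_n)\|\le\psi(a^*a)^{1/2}$ for every $a\in\mathfrak{A}$. Furthermore, $\lim_{n\to\infty}\|\pi(\Delta_n)^*\Pi(a)\pi(\Delta_n)\|=0$ for every self-adjoint $a\in\mathfrak{A}$ with $\psi(a)=0$.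
   Context: An operator system is a unital self-adjoint subspace of $\mathfrak{A}$. A sequence $(\Delta_n)_n$ in $\mathfrak{A}$ is a characteristic sequence for a state $\psi$ if (a) $\|\Delta_n\|=1$ for all $n$, (b) $\lim_{n\to\infty}\psi(\Delta_n)=1$, and (c) $\limsup_{n\to\infty}\|\Delta_n^*a\Delta_n\|\le|\psi(a)|$ for every $a\in\mathfrak{A}$. *)

theory Defs
  imports "HOL-Analysis.Analysis"
begin

class cvec = real_vector +
  fixes scaleC :: "complex \<Rightarrow> 'a \<Rightarrow> 'a"  (infixr "*\<^sub>C" 75)
  assumes scaleC_add_right: "c *\<^sub>C (x + y) = c *\<^sub>C x + c *\<^sub>C y"
    and scaleC_add_left: "(c + d) *\<^sub>C x = c *\<^sub>C x + d *\<^sub>C x"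
    and scaleC_scaleC: "c *\<^sub>C (d *\<^sub>C x) = (c * d) *\<^sub>C x"
    and scaleC_one: "1 *\<^sub>C x = x"
    and scaleR_scaleC: "scaleR r x = complex_of_real r *\<^sub>C x"

class cnormed_vec = cvec + real_normed_vector +
  assumes norm_scaleC: "norm (c *\<^sub>C x) = cmod c * norm x"

class cstar_algebra = cnormed_vec + real_normed_algebra_1 + banach +
  fixes cstar :: "'a \<Rightarrow> 'a"
  assumes mult_scaleC_left: "(c *\<^sub>C x) * y = c *\<^sub>C (x * y)"
    and mult_scaleC_right: "x * (c *\<^sub>C y) = c *\<^sub>C (x * y)"
    and cstar_cstar: "cstar (cstar x) = x"
    and cstar_add: "cstar (x + y) = cstar x + cstar y"
    and cstar_scaleC: "cstar (c *\<^sub>C x) = cnj c *\<^sub>C cstar x"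
    and cstar_mult: "cstar (x * y) = cstar y * cstar x"
    and cstar_identity: "norm (cstar x * x) = (norm x)\<^sup>2"

text \<open>Complex Hilbert spaces (inner product conjugate-linear in the first argument).\<close>
class chilbert = cnormed_vec + complete_space +
  fixes cinner :: "'a \<Rightarrow> 'a \<Rightarrow> complex"
  assumes cinner_commute: "cinner x y = cnj (cinner y x)"
    and cinner_add_left: "cinner (x + y) z = cinner x z + cinner y z"
    and cinner_scaleC_left: "cinner (c *\<^sub>C x) y = cnj c * cinner x y"
    and cinner_self_real: "Im (cinner x x) = 0"
    and cinner_self_nonneg: "0 \<le> Re (cinner x x)"
    and cinner_self_zero: "cinner x x = 0 \<longleftrightarrow> x = 0"
    and norm_cinner: "norm x = sqrt (Re (cinner x x))"

definition clinear :: "('a::cvec \<Rightarrow> 'b::cvec) \<Rightarrow> bool" where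
  "clinear f \<longleftrightarrow> (\<forall>x y. f (x + y) = f x + f y) \<and> (\<forall>c x. f (c *\<^sub>C x) = c *\<^sub>C f x)"

definition bounded_clinear :: "('a::cnormed_vec \<Rightarrow> 'b::cnormed_vec) \<Rightarrow> bool" where
  "bounded_clinear f \<longleftrightarrow> clinear f \<and> (\<exists>K. \<forall>x. norm (f x) \<le> norm x * K)"

text \<open>Elements of B(H) are represented as bounded complex-linear maps; the
  operator norm is onorm; the adjoint is the Hilbert space adjoint.\<close>
definition hadj :: "('h::chilbert \<Rightarrow> 'h) \<Rightarrow> ('h \<Rightarrow> 'h)" where
  "hadj T = (THE S. \<forall>x y. cinner (T x) y = cinner x (S y))"

definition op_matrix_pos :: "nat \<Rightarrow> (nat \<Rightarrow> nat \<Rightarrow> ('h::chilbert \<Rightarrow> 'h)) \<Rightarrow> bool" where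
  "op_matrix_pos n T \<longleftrightarrow> (\<forall>\<xi> :: nat \<Rightarrow> 'h.
      Im (\<Sum>i<n. \<Sum>j<n. cinner (\<xi> i) (T i j (\<xi> j))) = 0 \<and>
      0 \<le> Re (\<Sum>i<n. \<Sum>j<n. cinner (\<xi> i) (T i j (\<xi> j))))"

definition cstar_matrix_pos :: "nat \<Rightarrow> (nat \<Rightarrow> nat \<Rightarrow> 'a::cstar_algebra) \<Rightarrow> bool" where
  "cstar_matrix_pos n X \<longleftrightarrow> (\<exists>Y :: nat \<Rightarrow> nat \<Rightarrow> 'a.
      \<forall>i<n. \<forall>j<n. X i j = (\<Sum>k<n. cstar (Y k i) * Y k j))"

definition clinear_op_map :: "('a::cstar_algebra \<Rightarrow> ('h::chilbert \<Rightarrow> 'h)) \<Rightarrow> bool" where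
  "clinear_op_map \<Phi> \<longleftrightarrow> (\<forall>a. bounded_clinear (\<Phi> a)) \<and>
     (\<forall>a b. \<Phi> (a + b) = (\<lambda>h. \<Phi> a h + \<Phi> b h)) \<and>
     (\<forall>c a. \<Phi> (c *\<^sub>C a) = (\<lambda>h. c *\<^sub>C \<Phi> a h))"

definition unital_star_rep :: "('a::cstar_algebra \<Rightarrow> ('h::chilbert \<Rightarrow> 'h)) \<Rightarrow> bool" where
  "unital_star_rep \<pi> \<longleftrightarrow> clinear_op_map \<pi> \<and> \<pi> 1 = id \<and>
     (\<forall>a b. \<pi> (a * b) = \<pi> a \<circ> \<pi> b) \<and> (\<forall>a. \<pi> (cstar a) = hadj (\<pi> a))"

definition completely_positive :: "('a::cstar_algebra \<Rightarrow> ('h::chilbert \<Rightarrow> 'h)) \<Rightarrow> bool" where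
  "completely_positive \<Phi> \<longleftrightarrow>
     (\<forall>n X. cstar_matrix_pos n X \<longrightarrow> op_matrix_pos n (\<lambda>i j. \<Phi> (X i j)))"

definition ucp :: "('a::cstar_algebra \<Rightarrow> ('h::chilbert \<Rightarrow> 'h)) \<Rightarrow> bool" where
  "ucp \<Phi> \<longleftrightarrow> clinear_op_map \<Phi> \<and> \<Phi> 1 = id \<and> completely_positive \<Phi>"

definition operator_system :: "'a::cstar_algebra set \<Rightarrow> bool" where
  "operator_system S \<longleftrightarrow> 0 \<in> S \<and> 1 \<in> S \<and>
     (\<forall>x\<in>S. \<forall>y\<in>S. x + y \<in> S) \<and> (\<forall>c. \<forall>x\<in>S. c *\<^sub>C x \<in> S) \<and>
     (\<forall>x\<in>S. cstar x \<in> S)"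

definition cstate :: "('a::cstar_algebra \<Rightarrow> complex) \<Rightarrow> bool" where
  "cstate \<psi> \<longleftrightarrow> (\<forall>x y. \<psi> (x + y) = \<psi> x + \<psi> y) \<and> (\<forall>c x. \<psi> (c *\<^sub>C x) = c * \<psi> x) \<and>
     (\<forall>a. Im (\<psi> (cstar a * a)) = 0 \<and> 0 \<le> Re (\<psi> (cstar a * a))) \<and> \<psi> 1 = 1"

definition characteristic_sequence :: "('a::cstar_algebra \<Rightarrow> complex) \<Rightarrow> (nat \<Rightarrow> 'a) \<Rightarrow> bool" where
  "characteristic_sequence \<psi> \<Delta> \<longleftrightarrow>
     (\<forall>n. norm (\<Delta> n) = 1) \<and>
     (\<lambda>n. \<psi> (\<Delta> n)) \<longlonglongrightarrow> 1 \<and>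
     (\<forall>a. limsup (\<lambda>n. ereal (norm (cstar (\<Delta> n) * a * \<Delta> n))) \<le> ereal (cmod (\<psi> a)))"

end

theory Submission
  imports Defs "HOL-Computational_Algebra.Formal_Power_Series"
begin


lemma scaleC_zero_right [simp]: "c *\<^sub>C (0::'a::cvec) = 0"
proof -
  have "c *\<^sub>C (0::'a) = c *\<^sub>C (0 + 0)" by simp
  also have "\<dots> = c *\<^sub>C 0 + c *\<^sub>C 0" by (rule scaleC_add_right)
  finally have "c *\<^sub>C (0::'a) = c *\<^sub>C 0 + c *\<^sub>C 0" .
  then show ?thesis by simp
qed

lemma scaleC_zero_left [simp]: "0 *\<^sub>C (x::'a::cvec) = 0"
proof -
  have "0 *\<^sub>C x = (0 + 0) *\<^sub>C (x::'a)" by simp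
  also have "\<dots> = 0 *\<^sub>C x + 0 *\<^sub>C x" by (rule scaleC_add_left)
  finally have "0 *\<^sub>C x = 0 *\<^sub>C x + 0 *\<^sub>C (x::'a)" .
  then show ?thesis by simp
qed

lemma scaleC_minus_left: "(- c) *\<^sub>C (x::'a::cvec) = - (c *\<^sub>C x)"
proof -
  have "(- c) *\<^sub>C x + c *\<^sub>C x = (- c + c) *\<^sub>C x" by (rule scaleC_add_left[symmetric])
  then have "(- c) *\<^sub>C x + c *\<^sub>C x = 0" by simp
  then show ?thesis by (simp add: add_eq_0_iff2)
qed

lemma scaleC_minus_right: "c *\<^sub>C (- x::'a::cvec) = - (c *\<^sub>C x)"
proof -
  have "c *\<^sub>C (-x) + c *\<^sub>C x = c *\<^sub>C (-x + x)" by (rule scaleC_add_right[symmetric])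
  then have "c *\<^sub>C (-x) + c *\<^sub>C x = 0" by simp
  then show ?thesis by (simp add: add_eq_0_iff2)
qed

lemma scaleC_diff_right: "c *\<^sub>C (x - y::'a::cvec) = c *\<^sub>C x - c *\<^sub>C y"
  by (simp only: diff_conv_add_uminus scaleC_add_right scaleC_minus_right)

lemma scaleC_diff_left: "(c - d) *\<^sub>C (x::'a::cvec) = c *\<^sub>C x - d *\<^sub>C x"
  by (simp only: diff_conv_add_uminus scaleC_add_left scaleC_minus_left)

lemma scaleC_of_real: "complex_of_real r *\<^sub>C (x::'a::cvec) = r *\<^sub>R x"
  by (simp add: scaleR_scaleC)

lemma scaleC_minus1: "(-1) *\<^sub>C (x::'a::cvec) = - x"
  by (simp add: scaleC_minus_left scaleC_one)

section \<open>Hilbert space basics\<close>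

lemma cinner_add_right: "cinner x (y + z) = cinner x y + cinner (x::'a::chilbert) z"
proof -
  have "cinner x (y + z) = cnj (cinner (y + z) x)" by (rule cinner_commute)
  also have "\<dots> = cnj (cinner y x) + cnj (cinner z x)" by (simp add: cinner_add_left)
  also have "\<dots> = cinner x y + cinner x z" by (simp add: cinner_commute[of x y] cinner_commute[of x z])
  finally show ?thesis .
qed

lemma cinner_scaleC_right: "cinner x (c *\<^sub>C y) = c * cinner (x::'a::chilbert) y"
proof -
  have "cinner x (c *\<^sub>C y) = cnj (cinner (c *\<^sub>C y) x)" by (rule cinner_commute)
  also have "\<dots> = c * cnj (cinner y x)" by (simp add: cinner_scaleC_left)
  also have "\<dots> = c * cinner x y" by (simp add: cinner_commute[of x y])
  finally show ?thesis .
qed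

lemma cinner_zero_left [simp]: "cinner 0 (x::'a::chilbert) = 0"
proof -
  have "cinner 0 x = cinner (0 *\<^sub>C (0::'a)) x" by simp
  also have "\<dots> = 0" by (simp only: cinner_scaleC_left) simp
  finally show ?thesis .
qed

lemma cinner_zero_right [simp]: "cinner x (0::'a::chilbert) = 0"
proof -
  have "cinner x 0 = cinner x (0 *\<^sub>C (0::'a))" by simp
  also have "\<dots> = 0" by (simp only: cinner_scaleC_right) simp
  finally show ?thesis .
qed

lemma cinner_minus_left: "cinner (- x) (y::'a::chilbert) = - cinner x y"
proof -
  have "cinner (- x) y = cinner ((-1) *\<^sub>C x) y" by (simp add: scaleC_minus1)
  also have "\<dots> = - cinner x y" by (simp only: cinner_scaleC_left) simp
  finally show ?thesis .
qed

lemma cinner_minus_right: "cinner x (- y::'a::chilbert) = - cinner x y"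
proof -
  have "cinner x (- y) = cinner x ((-1) *\<^sub>C y)" by (simp add: scaleC_minus1)
  also have "\<dots> = - cinner x y" by (simp only: cinner_scaleC_right) simp
  finally show ?thesis .
qed

lemma cinner_diff_left: "cinner (x - y) (z::'a::chilbert) = cinner x z - cinner y z"
  by (simp only: diff_conv_add_uminus cinner_add_left cinner_minus_left)

lemma cinner_diff_right: "cinner x (y - z::'a::chilbert) = cinner x y - cinner x z"
  by (simp only: diff_conv_add_uminus cinner_add_right cinner_minus_right)

lemma cinner_self: "cinner x (x::'a::chilbert) = complex_of_real ((norm x)\<^sup>2)"
proof -
  have "(norm x)\<^sup>2 = Re (cinner x x)" using norm_cinner[of x] cinner_self_nonneg[of x] by simp
  then show ?thesis using cinner_self_real[of x] by (simp add: complex_eq_iff)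
qed

lemma Re_cinner_self: "Re (cinner x (x::'a::chilbert)) = (norm x)\<^sup>2"
  by (simp add: cinner_self)

lemma quad_cs:
  fixes A C :: real and \<alpha> :: complex
  assumes q: "\<And>t::complex. 0 \<le> A + 2 * Re (t * \<alpha>) + (cmod t)\<^sup>2 * C"
  shows "(cmod \<alpha>)\<^sup>2 \<le> A * C"
proof (cases "\<alpha> = 0")
  case True
  have "0 \<le> A" using q[of 0] by simp
  moreover have "0 \<le> C" 
  proof (rule ccontr)
    assume "\<not> 0 \<le> C"
    then have C: "C < 0" by simp
    define s where "s = sqrt ((\<bar>A\<bar> + 1) / (- C))"
    have "0 \<le> (\<bar>A\<bar> + 1) / (- C)" using C by (intro divide_nonneg_pos) auto
    then have "s\<^sup>2 = (\<bar>A\<bar> + 1) / (- C)" unfolding s_def by (rule real_sqrt_pow2)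
    then have "s\<^sup>2 * C = - (\<bar>A\<bar> + 1)" using C by (simp add: field_simps)
    moreover have "cmod (complex_of_real s) = \<bar>s\<bar>" by simp
    ultimately show False using q[of "complex_of_real s"] True by (simp add: power2_abs)
  qed
  ultimately show ?thesis using True by simp
next
  case False
  let ?a = "cmod \<alpha>"
  have a0: "?a > 0" using False by simp
  have qs: "0 \<le> A - 2 * s * ?a + s\<^sup>2 * C" for s :: real
  proof -
    define t where "t = - complex_of_real s * cnj \<alpha> / complex_of_real ?a"
    have "t * \<alpha> = - complex_of_real s * (cnj \<alpha> * \<alpha>) / complex_of_real ?a"
      unfolding t_def by (simp add: field_simps)
    also have "cnj \<alpha> * \<alpha> = complex_of_real (?a\<^sup>2)"
      by (simp add: mult.commute[of "cnj \<alpha>"] complex_mult_cnj cmod_power2)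
    finally have "t * \<alpha> = - complex_of_real (s * ?a)" using a0
      by (simp add: power2_eq_square field_simps)
    then have "Re (t * \<alpha>) = - s * ?a" by simp
    moreover have "cmod t = \<bar>s\<bar>" unfolding t_def using a0
      by (simp add: norm_mult norm_divide)
    ultimately show ?thesis using q[of t] by (simp add: power2_abs)
  qed
  have A0: "0 \<le> A" using qs[of 0] by simp
  show ?thesis
  proof (cases "C > 0")
    case True
    have "0 \<le> A - 2 * (?a / C) * ?a + (?a / C)\<^sup>2 * C" by (rule qs)
    then have "0 \<le> A - ?a\<^sup>2 / C" using True by (simp add: power2_eq_square field_simps)
    then show ?thesis using True by (simp add: field_simps)
  next
    case False
    have "0 \<le> A - 2 * ((A + 1) / (2 * ?a)) * ?a + ((A + 1) / (2 * ?a))\<^sup>2 * C" by (rule qs)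
    moreover have "((A + 1) / (2 * ?a))\<^sup>2 * C \<le> 0" using False
      by (simp add: mult_nonneg_nonpos)
    moreover have "2 * ((A + 1) / (2 * ?a)) * ?a = A + 1" using a0 by simp
    ultimately show ?thesis by linarith
  qed
qed

lemma cinner_cs: "cmod (cinner x y) \<le> norm x * norm (y::'a::chilbert)"
proof -
  have "(cmod (cinner y x))\<^sup>2 \<le> (norm y)\<^sup>2 * (norm x)\<^sup>2"
  proof (rule quad_cs)
    fix t :: complex
    have "0 \<le> Re (cinner (y + t *\<^sub>C x) (y + t *\<^sub>C x))" by (rule cinner_self_nonneg)
    also have "cinner (y + t *\<^sub>C x) (y + t *\<^sub>C x) =
        cinner y y + t * cinner y x + cnj t * cinner x y + cnj t * t * cinner x x"
      by (simp add: cinner_add_left cinner_add_right cinner_scaleC_left cinner_scaleC_right algebra_simps)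
    also have "Re (cinner y y + t * cinner y x + cnj t * cinner x y + cnj t * t * cinner x x)
       = (norm y)\<^sup>2 + 2 * Re (t * cinner y x) + (cmod t)\<^sup>2 * (norm x)\<^sup>2"
    proof -
      have e1: "cinner x y = cnj (cinner y x)" by (rule cinner_commute)
      have e2: "cnj t * t = complex_of_real ((cmod t)\<^sup>2)"
        by (simp add: mult.commute[of "cnj t"] complex_mult_cnj cmod_power2)
      have e3: "Re (t * cinner y x + cnj t * cnj (cinner y x)) = 2 * Re (t * cinner y x)"
        by simp
      have "Re (cinner y y + t * cinner y x + cnj t * cinner x y + cnj t * t * cinner x x)
         = Re (cinner y y) + Re (t * cinner y x + cnj t * cnj (cinner y x)) + Re (cnj t * t * cinner x x)"
        unfolding e1[symmetric] by simp
      also have "Re (cnj t * t * cinner x x) = (cmod t)\<^sup>2 * (norm x)\<^sup>2"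
        unfolding e2 cinner_self by simp
      finally show ?thesis unfolding e3 Re_cinner_self by simp
    qed
    finally show "0 \<le> (norm y)\<^sup>2 + 2 * Re (t * cinner y x) + (cmod t)\<^sup>2 * (norm x)\<^sup>2" .
  qed
  moreover have "cmod (cinner y x) = cmod (cinner x y)" by (metis cinner_commute complex_mod_cnj)
  ultimately have "(cmod (cinner x y))\<^sup>2 \<le> (norm x * norm y)\<^sup>2" by (simp add: power_mult_distrib mult.commute)
  then show ?thesis by (rule power2_le_imp_le) simp
qed



section \<open>C*-algebra basics\<close>

lemma cstar_zero [simp]: "cstar (0::'a::cstar_algebra) = 0"
proof -
  have "cstar (0::'a) = cstar (0 *\<^sub>C 0)" by simp
  also have "\<dots> = 0" by (simp only: cstar_scaleC) simp
  finally show ?thesis .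
qed

lemma cstar_minus: "cstar (- x) = - cstar (x::'a::cstar_algebra)"
proof -
  have "cstar (- x) = cstar ((-1) *\<^sub>C x)" by (simp add: scaleC_minus1)
  also have "\<dots> = (-1) *\<^sub>C cstar x" by (simp only: cstar_scaleC) simp
  finally show ?thesis by (simp add: scaleC_minus1)
qed

lemma cstar_diff: "cstar (x - y) = cstar x - cstar (y::'a::cstar_algebra)"
  by (simp only: diff_conv_add_uminus cstar_add cstar_minus)

lemma cstar_one [simp]: "cstar (1::'a::cstar_algebra) = 1"
proof -
  have "cstar (1::'a) = cstar 1 * 1" by simp
  also have "\<dots> = cstar 1 * cstar (cstar 1)" by (simp add: cstar_cstar)
  also have "\<dots> = cstar (cstar 1 * 1)" by (rule cstar_mult[symmetric])
  also have "\<dots> = 1" by (simp add: cstar_cstar)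
  finally show ?thesis .
qed

lemma cstar_scaleR: "cstar (r *\<^sub>R x) = r *\<^sub>R cstar (x::'a::cstar_algebra)"
  by (simp add: scaleR_scaleC cstar_scaleC)

lemma norm_cstar_le: "norm x \<le> norm (cstar (x::'a::cstar_algebra))"
proof (cases "x = 0")
  case True then show ?thesis by simp
next
  case False
  have "(norm x)\<^sup>2 = norm (cstar x * x)" by (simp add: cstar_identity)
  also have "\<dots> \<le> norm (cstar x) * norm x" by (rule norm_mult_ineq)
  finally have "norm x * norm x \<le> norm (cstar x) * norm x" by (simp add: power2_eq_square)
  then show ?thesis using False by simp
qed

lemma norm_cstar [simp]: "norm (cstar (x::'a::cstar_algebra)) = norm x"
  using norm_cstar_le[of x] norm_cstar_le[of "cstar x"] by (simp add: cstar_cstar)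

lemma cstar_power: "cstar (x ^ n) = (cstar (x::'a::cstar_algebra)) ^ n"
proof (induction n)
  case 0 then show ?case by simp
next
  case (Suc n)
  have "cstar (x ^ Suc n) = cstar (x * x ^ n)" by simp
  also have "\<dots> = cstar x ^ n * cstar x" by (simp add: cstar_mult Suc)
  also have "\<dots> = cstar x ^ Suc n" by (simp add: power_commutes)
  finally show ?case .
qed

lemma bounded_linear_cstar: "bounded_linear (cstar :: 'a::cstar_algebra \<Rightarrow> 'a)"
  by (rule bounded_linear_intro[where K=1]) (simp_all add: cstar_add cstar_scaleR)

lemma norm_cstar_mult_self: "norm (cstar x * x) = (norm (x::'a::cstar_algebra))\<^sup>2"
  by (rule cstar_identity)

section \<open>Square roots of 1 - h\<close>

definition sqc :: "nat \<Rightarrow> real" where "sqc k = ((1/2::real) gchoose k) * (-1) ^ k"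

lemma gbin_half_bound: "\<bar>(1/2::real) gchoose k\<bar> \<le> 1"
proof (induction k)
  case 0 then show ?case by simp
next
  case (Suc k)
  have e: "(1/2::real) * ((1/2) gchoose k) = of_nat k * ((1/2) gchoose k) + of_nat (Suc k) * ((1/2) gchoose (Suc k))"
    by (rule gbinomial_mult_1)
  then have "((1/2::real) gchoose (Suc k)) = (1/2 - of_nat k) * ((1/2) gchoose k) / of_nat (Suc k)"
    by (simp add: field_simps del: of_nat_Suc)
  then have "\<bar>(1/2::real) gchoose (Suc k)\<bar> = \<bar>1/2 - of_nat k\<bar> / of_nat (Suc k) * \<bar>(1/2) gchoose k\<bar>"
    by (simp add: abs_mult abs_divide)
  also have "\<dots> \<le> 1 * 1"
  proof (rule mult_mono)
    show "\<bar>1/2 - real k\<bar> / real (Suc k) \<le> 1" by (simp add: field_simps)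
  qed (use Suc in auto)
  finally show ?case by simp
qed

lemma sqc_bound: "\<bar>sqc k\<bar> \<le> 1"
  unfolding sqc_def using gbin_half_bound[of k] by (simp add: abs_mult)

lemma sqc_conv: "(\<Sum>i\<le>n. sqc i * sqc (n - i)) = (if n = 0 then 1 else if n = 1 then -1 else 0)"
proof -
  have "(\<Sum>i\<le>n. sqc i * sqc (n - i)) = (\<Sum>i\<in>{0..n}. (-1)^n * (((1/2::real) gchoose i) * ((1/2) gchoose (n - i))))"
  proof (rule sum.cong)
    fix i assume "i \<in> {0..n}"
    then have "i \<le> n" by simp
    then have "(-1::real) ^ i * (-1) ^ (n - i) = (-1) ^ n" by (simp add: power_add[symmetric])
    then show "sqc i * sqc (n - i) = (-1)^n * (((1/2::real) gchoose i) * ((1/2) gchoose (n - i)))"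
      unfolding sqc_def by (simp add: algebra_simps)
  qed (simp add: atMost_atLeast0)
  also have "\<dots> = (-1)^n * ((1/2 + 1/2::real) gchoose n)"
    by (simp only: sum_distrib_left[symmetric] gbinomial_Vandermonde)
  also have "(1/2 + 1/2::real) gchoose n = of_nat (1 choose n)"
    using binomial_gbinomial[of 1 n, where 'a=real] by simp
  finally have e: "(\<Sum>i\<le>n. sqc i * sqc (n - i)) = (-1)^n * of_nat (1 choose n)" .
  show ?thesis
  proof (cases "n \<le> 1")
    case True then have "n = 0 \<or> n = 1" by auto
    then show ?thesis using e by auto
  next
    case False then show ?thesis using e by (simp add: binomial_eq_0)
  qed
qed

lemma sqrt_one_minus:
  fixes h :: "'a::cstar_algebra"
  assumes hs: "cstar h = h" and hn: "norm h < 1"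
  shows "\<exists>z. cstar z * z = 1 - h"
proof -
  define f where "f k = sqc k *\<^sub>R h ^ k" for k
  have nf: "norm (f k) \<le> norm h ^ k" for k
  proof -
    have "norm (f k) = \<bar>sqc k\<bar> * norm (h ^ k)" unfolding f_def by simp
    also have "\<dots> \<le> 1 * norm h ^ k"
      by (rule mult_mono) (simp_all add: sqc_bound norm_power_ineq)
    finally show ?thesis by simp
  qed
  have sn: "summable (\<lambda>k. norm (f k))"
    by (rule summable_comparison_test[OF _ summable_geometric[of "norm h"]]) (use nf hn in auto)
  then have sf: "summable f" by (rule summable_norm_cancel)
  define z where "z = suminf f"
  have "cstar z = (\<Sum>k. cstar (f k))"
    unfolding z_def by (rule bounded_linear.suminf[OF bounded_linear_cstar sf])
  also have "(\<lambda>k. cstar (f k)) = f"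
    by (rule ext) (simp add: f_def cstar_scaleR cstar_power hs)
  finally have zs: "cstar z = z" unfolding z_def .
  have "(\<lambda>k. \<Sum>i\<le>k. f i * f (k - i)) sums (suminf f * suminf f)"
    by (rule Cauchy_product_sums[OF sn sn])
  moreover have "(\<lambda>k. \<Sum>i\<le>k. f i * f (k - i)) = (\<lambda>k. (\<Sum>i\<le>k. sqc i * sqc (k - i)) *\<^sub>R h ^ k)"
  proof (rule ext)
    fix k
    have "(\<Sum>i\<le>k. f i * f (k - i)) = (\<Sum>i\<le>k. (sqc i * sqc (k - i)) *\<^sub>R h ^ k)"
    proof (rule sum.cong)
      fix i assume "i \<in> {..k}"
      then have "h ^ i * h ^ (k - i) = h ^ k" by (simp add: power_add[symmetric])
      then show "f i * f (k - i) = (sqc i * sqc (k - i)) *\<^sub>R h ^ k"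
        unfolding f_def by (simp add: mult_scaleR_left mult_scaleR_right)
    qed simp
    also have "\<dots> = (\<Sum>i\<le>k. sqc i * sqc (k - i)) *\<^sub>R h ^ k" by (simp add: scaleR_sum_left)
    finally show "(\<Sum>i\<le>k. f i * f (k - i)) = (\<Sum>i\<le>k. sqc i * sqc (k - i)) *\<^sub>R h ^ k" .
  qed
  moreover have "(\<lambda>k. (\<Sum>i\<le>k. sqc i * sqc (k - i)) *\<^sub>R h ^ k) =
      (\<lambda>k. (if k = 0 then 1 else 0) + (if k = 1 then - h else 0))"
    by (rule ext) (simp add: sqc_conv)
  moreover have "(\<lambda>k. (if k = 0 then (1::'a) else 0) + (if k = 1 then - h else 0)) sums (1 + - h)"
    by (rule sums_add) (use sums_single[of 0 "\<lambda>_. 1::'a"] sums_single[of 1 "\<lambda>_. - h"] in simp_all)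
  ultimately have "z * z = 1 - h" unfolding z_def by (simp add: sums_unique2)
  then show ?thesis using zs by metis
qed

section \<open>Neumann series\<close>

lemma neumann:
  fixes h :: "'a::{banach, real_normed_algebra_1}"
  assumes hn: "norm h < 1"
  shows "\<exists>g. g * (1 - h) = 1"
proof -
  have sn: "summable (\<lambda>k. norm (h ^ k))"
    by (rule summable_comparison_test[OF _ summable_geometric[of "norm h"]])
       (use hn in \<open>auto simp: norm_power_ineq\<close>)
  then have s: "summable (\<lambda>k. h ^ k)" by (rule summable_norm_cancel)
  have "(\<lambda>n. h ^ n) \<longlonglongrightarrow> 0" using hn by (rule LIMSEQ_power_zero)
  then have "(\<lambda>n. h ^ n - h ^ Suc n) sums (h ^ 0 - 0)" by (rule telescope_sums')
  moreover have "(\<lambda>n. h ^ n - h ^ Suc n) = (\<lambda>n. h ^ n * (1 - h))"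
    by (rule ext) (simp add: algebra_simps power_commutes)
  ultimately have "(\<lambda>n. h ^ n * (1 - h)) sums 1" by simp
  moreover have "suminf (\<lambda>k. h ^ k) * (1 - h) = (\<Sum>n. h ^ n * (1 - h))"
    by (rule suminf_mult2[OF s])
  ultimately show ?thesis by (metis sums_unique)
qed

lemma neumann_scaled:
  fixes h :: "'a::{banach, real_normed_algebra_1}"
  assumes hn: "norm h < l"
  shows "\<exists>g. g * (l *\<^sub>R 1 - h) = 1"
proof -
  have l0: "l > 0" using hn norm_ge_zero[of h] by linarith
  have "norm ((1/l) *\<^sub>R h) < 1" using hn l0 by (simp add: field_simps)
  then obtain g where g: "g * (1 - (1/l) *\<^sub>R h) = 1" using neumann by blast
  have "((1/l) *\<^sub>R g) * (l *\<^sub>R 1 - h) = ((1/l) *\<^sub>R g) * (l *\<^sub>R (1 - (1/l) *\<^sub>R h))"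
    using l0 by (simp add: scaleR_diff_right)
  also have "\<dots> = ((1/l) * l) *\<^sub>R (g * (1 - (1/l) *\<^sub>R h))"
    by (simp only: mult_scaleR_left mult_scaleR_right scaleR_scaleR mult.commute)
  also have "\<dots> = 1" using l0 g by simp
  finally show ?thesis by blast
qed



lemma bcl_add: "bounded_clinear f \<Longrightarrow> f (x + y) = f x + f y"
  unfolding bounded_clinear_def clinear_def by blast

lemma bcl_scaleC: "bounded_clinear f \<Longrightarrow> f (c *\<^sub>C x) = c *\<^sub>C f x"
  unfolding bounded_clinear_def clinear_def by blast

lemma bcl_zero: "bounded_clinear f \<Longrightarrow> f 0 = 0"
  using bcl_scaleC[of f 0 0] by simp

lemma bcl_minus: "bounded_clinear f \<Longrightarrow> f (- x) = - f x"
  using bcl_scaleC[of f "-1" x] by (simp add: scaleC_minus1)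

lemma bcl_diff: "bounded_clinear f \<Longrightarrow> f (x - y) = f x - f y"
  by (simp only: diff_conv_add_uminus bcl_add bcl_minus)

lemma bcl_scaleR: "bounded_clinear f \<Longrightarrow> f (r *\<^sub>R x) = r *\<^sub>R f x"
  by (simp add: scaleR_scaleC bcl_scaleC)

lemma bcl_bound:
  fixes f :: "'a::cnormed_vec \<Rightarrow> 'b::cnormed_vec"
  shows "bounded_clinear f \<Longrightarrow> \<exists>K>0. \<forall>x. norm (f x) \<le> K * norm x"
proof -
  assume "bounded_clinear f"
  then obtain K where K: "\<forall>x. norm (f x) \<le> norm x * K" unfolding bounded_clinear_def by blast
  have "\<forall>x. norm (f x) \<le> (\<bar>K\<bar> + 1) * norm x"
  proof
    fix x :: 'a
    have "K \<le> \<bar>K\<bar> + 1" by simp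
    then have "norm x * K \<le> norm x * (\<bar>K\<bar> + 1)" by (rule mult_left_mono) simp
    then have "norm x * K \<le> (\<bar>K\<bar> + 1) * norm x" by (simp add: mult.commute)
    then show "norm (f x) \<le> (\<bar>K\<bar> + 1) * norm x" using K[rule_format, of x] by linarith
  qed
  moreover have "\<bar>K\<bar> + 1 > 0" by simp
  ultimately show ?thesis by blast
qed

lemma bcl_comp:
  fixes f :: "'b::cnormed_vec \<Rightarrow> 'c::cnormed_vec" and g :: "'a::cnormed_vec \<Rightarrow> 'b"
  shows "bounded_clinear f \<Longrightarrow> bounded_clinear g \<Longrightarrow> bounded_clinear (f \<circ> g)"
proof -
  assume f: "bounded_clinear f" and g: "bounded_clinear g"
  obtain K where K0: "K > 0" and K: "\<forall>x. norm (f x) \<le> K * norm x" using bcl_bound[OF f] by blast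
  obtain L where L: "L > 0" "\<forall>x. norm (g x) \<le> L * norm x" using bcl_bound[OF g] by blast
  have "norm (f (g x)) \<le> norm x * (K * L)" for x
  proof -
    have "norm (f (g x)) \<le> K * norm (g x)" using K by blast
    also have "\<dots> \<le> K * (L * norm x)"
      using L K0 by (intro mult_left_mono) auto
    finally show ?thesis by (simp add: algebra_simps)
  qed
  then show ?thesis using f g unfolding bounded_clinear_def clinear_def by auto
qed

context
  fixes \<Phi> :: "'a::cstar_algebra \<Rightarrow> ('h::chilbert \<Rightarrow> 'h)"
  assumes opm: "clinear_op_map \<Phi>"
begin

lemma om_bcl: "bounded_clinear (\<Phi> a)"
  using opm unfolding clinear_op_map_def by blast

lemma om_add: "\<Phi> (a + b) x = \<Phi> a x + \<Phi> b x"
proof -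
  have "\<Phi> (a + b) = (\<lambda>h. \<Phi> a h + \<Phi> b h)" using opm unfolding clinear_op_map_def by blast
  then show ?thesis by simp
qed

lemma om_scaleC: "\<Phi> (c *\<^sub>C a) x = c *\<^sub>C \<Phi> a x"
proof -
  have "\<Phi> (c *\<^sub>C a) = (\<lambda>h. c *\<^sub>C \<Phi> a h)" using opm unfolding clinear_op_map_def by blast
  then show ?thesis by simp
qed

lemma om_zero: "\<Phi> 0 x = 0"
  using om_scaleC[of 0 0 x] by simp

lemma om_minus: "\<Phi> (- a) x = - \<Phi> a x"
  using om_scaleC[of "-1" a x] by (simp add: scaleC_minus1)

lemma om_diff: "\<Phi> (a - b) x = \<Phi> a x - \<Phi> b x"
  by (simp only: diff_conv_add_uminus om_add om_minus)

lemma om_scaleR: "\<Phi> (r *\<^sub>R a) x = r *\<^sub>R \<Phi> a x"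
  by (simp add: scaleR_scaleC om_scaleC)

lemma om_lin_add: "\<Phi> a (x + y) = \<Phi> a x + \<Phi> a y"
  by (rule bcl_add[OF om_bcl])

lemma om_lin_scaleC: "\<Phi> a (c *\<^sub>C x) = c *\<^sub>C \<Phi> a x"
  by (rule bcl_scaleC[OF om_bcl])

lemma om_lin_zero: "\<Phi> a 0 = 0"
  by (rule bcl_zero[OF om_bcl])

lemma om_lin_minus: "\<Phi> a (- x) = - \<Phi> a x"
  by (rule bcl_minus[OF om_bcl])

lemma om_lin_diff: "\<Phi> a (x - y) = \<Phi> a x - \<Phi> a y"
  by (rule bcl_diff[OF om_bcl])

lemma om_lin_scaleR: "\<Phi> a (r *\<^sub>R x) = r *\<^sub>R \<Phi> a x"
  by (rule bcl_scaleR[OF om_bcl])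

end

section \<open>UCP maps\<close>

lemma rank1_pos:
  fixes r :: "nat \<Rightarrow> 'a::cstar_algebra"
  assumes "n > 0"
  shows "cstar_matrix_pos n (\<lambda>i j. cstar (r i) * r j)"
  unfolding cstar_matrix_pos_def
proof (intro exI allI impI)
  fix i j assume "i < n" "j < n"
  have "(\<Sum>k<n. cstar (if k = 0 then r i else 0) * (if k = 0 then r j else 0)) =
        (\<Sum>k<n. if k = 0 then cstar (r i) * r j else 0)"
    by (rule sum.cong) auto
  also have "\<dots> = cstar (r i) * r j" using assms by simp
  finally show "cstar (r i) * r j = (\<Sum>k<n. cstar (if k = 0 then r i else 0) * (if k = 0 then r j else 0))"
    by simp
qed

context
  fixes \<Phi> :: "'a::cstar_algebra \<Rightarrow> ('h::chilbert \<Rightarrow> 'h)"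
  assumes u: "ucp \<Phi>"
begin

lemma u_opm: "clinear_op_map \<Phi>" using u unfolding ucp_def by blast
lemma u_one: "\<Phi> 1 x = x" using u unfolding ucp_def by simp

lemma u_rank1:
  fixes n :: nat and \<xi> :: "nat \<Rightarrow> 'h" and r :: "nat \<Rightarrow> 'a"
  assumes "n > 0"
  shows "Im (\<Sum>i<n. \<Sum>j<n. cinner (\<xi> i) (\<Phi> (cstar (r i) * r j) (\<xi> j))) = 0 \<and>
         0 \<le> Re (\<Sum>i<n. \<Sum>j<n. cinner (\<xi> i) (\<Phi> (cstar (r i) * r j) (\<xi> j)))"
  using u rank1_pos[OF assms, of r] unfolding ucp_def completely_positive_def op_matrix_pos_def
  by blast

lemma u_pos: "0 \<le> Re (cinner x (\<Phi> (cstar z * z) x))"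
  using u_rank1[of 1 "\<lambda>_. x" "\<lambda>_. z"] by simp

lemma u_adj: "cinner (\<Phi> a x) y = cinner x (\<Phi> (cstar a) y)"
proof -
  define r where "r i = (if i = 0 then 1 else a)" for i :: nat
  define \<alpha> where "\<alpha> = cinner y (\<Phi> a x)"
  define \<gamma> where "\<gamma> = cinner x (\<Phi> (cstar a) y)"
  define \<beta> where "\<beta> = cinner x (\<Phi> (cstar a * a) x)"
  have key: "Im (cnj t * t * cinner y y + cnj t * \<alpha> + t * \<gamma> + \<beta>) = 0" for t
  proof -
    define \<xi> where "\<xi> i = (if i = 0 then t *\<^sub>C y else x)" for i :: nat
    have "Im (\<Sum>i<2. \<Sum>j<2. cinner (\<xi> i) (\<Phi> (cstar (r i) * r j) (\<xi> j))) = 0"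
      using u_rank1[of 2 \<xi> r] by simp
    moreover have "(\<Sum>i<2. \<Sum>j<2. cinner (\<xi> i) (\<Phi> (cstar (r i) * r j) (\<xi> j))) =
        cnj t * t * cinner y y + cnj t * \<alpha> + t * \<gamma> + \<beta>"
      by (simp add: numeral_2_eq_2 \<xi>_def r_def u_one \<alpha>_def \<beta>_def \<gamma>_def cinner_scaleC_left
          cinner_scaleC_right om_lin_scaleC[OF u_opm] algebra_simps)
    ultimately show ?thesis by simp
  qed
  have i0: "Im (cinner y y) = 0" by (rule cinner_self_real)
  from key[of 0] have "Im \<beta> = 0" by simp
  moreover from key[of 1] have "Im (cinner y y + \<alpha> + \<gamma> + \<beta>) = 0" by simp
  moreover from key[of \<i>] have "Im (cinner y y - \<i> * \<alpha> + \<i> * \<gamma> + \<beta>) = 0" by simp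
  ultimately have "Im \<gamma> = - Im \<alpha>" "Re \<gamma> = Re \<alpha>" using i0 by simp_all
  then have "\<gamma> = cnj \<alpha>" by (simp add: complex_eq_iff)
  then show ?thesis unfolding \<alpha>_def \<gamma>_def by (metis cinner_commute)
qed

end



lemma le_by_approx:
  fixes R B :: real
  assumes "\<And>t. 0 < t \<Longrightarrow> t < 1 \<Longrightarrow> t\<^sup>2 * R \<le> B"
  shows "R \<le> B"
proof -
  have "((\<lambda>t::real. t\<^sup>2 * R) \<longlongrightarrow> 1\<^sup>2 * R) (at_left 1)"
    by (intro tendsto_intros)
  then have lim: "((\<lambda>t::real. t\<^sup>2 * R) \<longlongrightarrow> R) (at_left 1)" by simp
  have ev: "eventually (\<lambda>t. B \<ge> t\<^sup>2 * R) (at_left (1::real))"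
    by (rule eventually_at_leftI[of 0]) (use assms in auto)
  show ?thesis by (rule tendsto_upperbound[OF lim ev]) simp
qed

definition Gf :: "('a::cstar_algebra \<Rightarrow> 'h::chilbert \<Rightarrow> 'h) \<Rightarrow> 'a \<Rightarrow> 'h \<Rightarrow> real" where
  "Gf \<Phi> u x = Re (cinner x (\<Phi> (cstar u * u) x)) - (norm (\<Phi> u x))\<^sup>2"

context
  fixes \<Phi> :: "'a::cstar_algebra \<Rightarrow> ('h::chilbert \<Rightarrow> 'h)"
  assumes u: "ucp \<Phi>"
begin

lemmas L = om_lin_scaleC[OF u_opm[OF u]] om_lin_add[OF u_opm[OF u]] om_lin_minus[OF u_opm[OF u]]
  om_lin_zero[OF u_opm[OF u]] om_lin_diff[OF u_opm[OF u]] om_add[OF u_opm[OF u]]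
  om_scaleC[OF u_opm[OF u]] om_minus[OF u_opm[OF u]] om_zero[OF u_opm[OF u]] om_diff[OF u_opm[OF u]]
  om_scaleR[OF u_opm[OF u]] om_lin_scaleR[OF u_opm[OF u]] u_one[OF u]

lemma schur_sum:
  "0 \<le> Gf \<Phi> a x1 + Gf \<Phi> b x2 + 2 * Re (cinner x1 (\<Phi> (cstar a * b) x2) - cinner (\<Phi> a x1) (\<Phi> b x2))"
proof -
  define r where "r i = (if i = 0 then 1 else if i = 1 then a else b)" for i :: nat
  define A where "A = \<Phi> a x1"
  define B where "B = \<Phi> b x2"
  define s where "s = A + B"
  define \<xi> where "\<xi> i = (if i = 0 then - s else if i = 1 then x1 else x2)" for i :: nat
  have pos: "0 \<le> Re (\<Sum>i<3. \<Sum>j<3. cinner (\<xi> i) (\<Phi> (cstar (r i) * r j) (\<xi> j)))"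
    using u_rank1[OF u, of 3 \<xi> r] by simp
  have e: "(\<Sum>i<3. \<Sum>j<3. cinner (\<xi> i) (\<Phi> (cstar (r i) * r j) (\<xi> j))) =
     (cinner (- s) (\<Phi> 1 (- s)) + cinner (- s) (\<Phi> a x1) + cinner (- s) (\<Phi> b x2)) +
     (cinner x1 (\<Phi> (cstar a) (- s)) + cinner x1 (\<Phi> (cstar a * a) x1) + cinner x1 (\<Phi> (cstar a * b) x2)) +
     (cinner x2 (\<Phi> (cstar b) (- s)) + cinner x2 (\<Phi> (cstar b * a) x1) + cinner x2 (\<Phi> (cstar b * b) x2))"
    by (simp add: numeral_3_eq_3 r_def \<xi>_def)
  have e1: "cinner x1 (\<Phi> (cstar a) (- s)) = cinner A (- s)"
    unfolding A_def by (rule u_adj[OF u, symmetric])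
  have e2: "cinner x2 (\<Phi> (cstar b) (- s)) = cinner B (- s)"
    unfolding B_def by (rule u_adj[OF u, symmetric])
  have e3: "cinner x2 (\<Phi> (cstar b * a) x1) = cnj (cinner x1 (\<Phi> (cstar a * b) x2))"
  proof -
    have "cinner x2 (\<Phi> (cstar b * a) x1) = cnj (cinner (\<Phi> (cstar b * a) x1) x2)" by (rule cinner_commute)
    also have "cinner (\<Phi> (cstar b * a) x1) x2 = cinner x1 (\<Phi> (cstar (cstar b * a)) x2)" by (rule u_adj[OF u])
    also have "cstar (cstar b * a) = cstar a * b" by (simp add: cstar_mult cstar_cstar)
    finally show ?thesis .
  qed
  have e4: "cinner (- s) (\<Phi> 1 (- s)) + cinner (- s) (\<Phi> a x1) + cinner (- s) (\<Phi> b x2)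
      + cinner A (- s) + cinner B (- s) = - cinner s s"
  proof -
    have f1: "cinner (- s) (\<Phi> 1 (- s)) = cinner s s" by (simp add: L cinner_minus_left cinner_minus_right)
    have g2: "cinner s s = cinner s A + cinner s B" using cinner_add_right[of s A B] s_def by simp
    have g3: "cinner s s = cinner A s + cinner B s" using cinner_add_left[of A B s] s_def by simp
    have f2: "cinner (- s) A + cinner (- s) B = - cinner s s"
      by (simp add: cinner_minus_left g2)
    have f3: "cinner A (- s) + cinner B (- s) = - cinner s s"
      by (simp add: cinner_minus_right g3)
    show ?thesis using f1 f2 f3 unfolding A_def[symmetric] B_def[symmetric] by (simp add: algebra_simps)
  qed
  have e5: "cinner s s = cinner A A + cinner B B + (cinner A B + cnj (cinner A B))"
    unfolding s_def by (simp add: cinner_add_left cinner_add_right cinner_commute[of B A])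
  define T where "T = cinner x1 (\<Phi> (cstar a * b) x2)"
  have "(\<Sum>i<3. \<Sum>j<3. cinner (\<xi> i) (\<Phi> (cstar (r i) * r j) (\<xi> j))) =
     - cinner s s + cinner x1 (\<Phi> (cstar a * a) x1) + cinner x2 (\<Phi> (cstar b * b) x2) + (T + cnj T)"
    unfolding e e1 e2 e3 T_def[symmetric] e4[symmetric] by (simp add: algebra_simps)
  then have "Re (\<Sum>i<3. \<Sum>j<3. cinner (\<xi> i) (\<Phi> (cstar (r i) * r j) (\<xi> j))) =
     - (norm A)\<^sup>2 - (norm B)\<^sup>2 - 2 * Re (cinner A B) + Re (cinner x1 (\<Phi> (cstar a * a) x1))
       + Re (cinner x2 (\<Phi> (cstar b * b) x2)) + 2 * Re T"
    unfolding e5 by (simp add: Re_cinner_self)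
  with pos show ?thesis unfolding Gf_def T_def A_def B_def by simp
qed

lemma Gf_scaleC: "Gf \<Phi> a (c *\<^sub>C x) = (cmod c)\<^sup>2 * Gf \<Phi> a x"
proof -
  have e: "cnj c * c = complex_of_real ((cmod c)\<^sup>2)"
    by (simp add: mult.commute[of "cnj c"] complex_mult_cnj cmod_power2)
  have "cinner (c *\<^sub>C x) (\<Phi> (cstar a * a) (c *\<^sub>C x)) = (cnj c * c) * cinner x (\<Phi> (cstar a * a) x)"
    by (simp add: L cinner_scaleC_left cinner_scaleC_right)
  then have "Re (cinner (c *\<^sub>C x) (\<Phi> (cstar a * a) (c *\<^sub>C x))) = (cmod c)\<^sup>2 * Re (cinner x (\<Phi> (cstar a * a) x))"
    unfolding e by simp
  moreover have "norm (\<Phi> a (c *\<^sub>C x)) = cmod c * norm (\<Phi> a x)" by (simp add: L norm_scaleC)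
  ultimately show ?thesis unfolding Gf_def by (simp add: power_mult_distrib algebra_simps)
qed

lemma Gf_nonneg: "0 \<le> Gf \<Phi> a x"
proof -
  have "Gf \<Phi> b 0 = 0" for b unfolding Gf_def by (simp add: L)
  then show ?thesis using schur_sum[of a x 0 0] by (simp add: L)
qed

lemma schur:
  "(cmod (cinner x1 (\<Phi> (cstar a * b) x2) - cinner (\<Phi> a x1) (\<Phi> b x2)))\<^sup>2 \<le> Gf \<Phi> a x1 * Gf \<Phi> b x2"
proof -
  define \<beta> where "\<beta> = cinner x1 (\<Phi> (cstar a * b) x2) - cinner (\<Phi> a x1) (\<Phi> b x2)"
  have "(cmod \<beta>)\<^sup>2 \<le> Gf \<Phi> b x2 * Gf \<Phi> a x1"
  proof (rule quad_cs)
    fix t :: complex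
    have "0 \<le> Gf \<Phi> a (cnj t *\<^sub>C x1) + Gf \<Phi> b x2 +
        2 * Re (cinner (cnj t *\<^sub>C x1) (\<Phi> (cstar a * b) x2) - cinner (\<Phi> a (cnj t *\<^sub>C x1)) (\<Phi> b x2))"
      by (rule schur_sum)
    also have "cinner (cnj t *\<^sub>C x1) (\<Phi> (cstar a * b) x2) - cinner (\<Phi> a (cnj t *\<^sub>C x1)) (\<Phi> b x2) = t * \<beta>"
      unfolding \<beta>_def by (simp add: L cinner_scaleC_left algebra_simps)
    finally show "0 \<le> Gf \<Phi> b x2 + 2 * Re (t * \<beta>) + (cmod t)\<^sup>2 * Gf \<Phi> a x1"
      by (simp add: Gf_scaleC)
  qed
  then show ?thesis unfolding \<beta>_def by (simp add: mult.commute)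
qed

lemma u_bound: "Re (cinner x (\<Phi> (cstar a * a) x)) \<le> (norm a)\<^sup>2 * (norm x)\<^sup>2"
proof (cases "a = 0")
  case True then show ?thesis by (simp add: L)
next
  case False
  then have na: "norm a > 0" by simp
  show ?thesis
  proof (rule le_by_approx)
    fix t :: real assume t: "0 < t" "t < 1"
    define c where "c = (t / norm a)\<^sup>2"
    define h where "h = c *\<^sub>R (cstar a * a)"
    have hs: "cstar h = h" unfolding h_def by (simp add: cstar_scaleR cstar_mult cstar_cstar)
    have "norm h = c * (norm a)\<^sup>2" unfolding h_def c_def by (simp add: cstar_identity)
    also have "\<dots> = t\<^sup>2" unfolding c_def using na by (simp add: power_divide)
    also have "\<dots> < 1" using t by (simp add: power_less_one_iff)
    finally obtain z where z: "cstar z * z = 1 - h" using sqrt_one_minus[OF hs] by blast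
    have "0 \<le> Re (cinner x (\<Phi> (cstar z * z) x))" by (rule u_pos[OF u])
    also have "cinner x (\<Phi> (cstar z * z) x) = cinner x x - c * cinner x (\<Phi> (cstar a * a) x)"
      unfolding z h_def by (simp add: L cinner_diff_right scaleR_scaleC cinner_scaleC_right)
    finally have "c * Re (cinner x (\<Phi> (cstar a * a) x)) \<le> (norm x)\<^sup>2"
      by (simp add: Re_cinner_self)
    then have "(norm a)\<^sup>2 * (c * Re (cinner x (\<Phi> (cstar a * a) x))) \<le> (norm a)\<^sup>2 * (norm x)\<^sup>2"
      by (rule mult_left_mono) simp
    moreover have "(norm a)\<^sup>2 * c = t\<^sup>2" unfolding c_def using na by (simp add: power_divide)
    ultimately show "t\<^sup>2 * Re (cinner x (\<Phi> (cstar a * a) x)) \<le> (norm a)\<^sup>2 * (norm x)\<^sup>2"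
      by (simp add: mult.assoc[symmetric])
  qed
qed

lemma u_norm_sq: "(norm (\<Phi> a x))\<^sup>2 \<le> Re (cinner x (\<Phi> (cstar a * a) x))"
  using Gf_nonneg[of a x] unfolding Gf_def by simp

lemma u_contr: "norm (\<Phi> a x) \<le> norm a * norm x"
proof -
  have "(norm (\<Phi> a x))\<^sup>2 \<le> (norm a * norm x)\<^sup>2"
    using u_norm_sq[of a x] u_bound[of x a] by (simp add: power_mult_distrib)
  then show ?thesis by (rule power2_le_imp_le) simp
qed

lemma Gf_le: "Gf \<Phi> a x \<le> (norm a)\<^sup>2 * (norm x)\<^sup>2 - (norm (\<Phi> a x))\<^sup>2"
  unfolding Gf_def using u_bound[of x a] by simp

end

section \<open>States\<close>

context
  fixes \<psi> :: "'a::cstar_algebra \<Rightarrow> complex"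
  assumes st: "cstate \<psi>"
begin

lemma st_add: "\<psi> (a + b) = \<psi> a + \<psi> b" using st unfolding cstate_def by blast
lemma st_scaleC: "\<psi> (c *\<^sub>C a) = c * \<psi> a" using st unfolding cstate_def by blast
lemma st_one: "\<psi> 1 = 1" using st unfolding cstate_def by blast
lemma st_pos: "Im (\<psi> (cstar a * a)) = 0" "0 \<le> Re (\<psi> (cstar a * a))"
  using st unfolding cstate_def by blast+
lemma st_zero: "\<psi> 0 = 0" using st_scaleC[of 0 0] by simp
lemma st_minus: "\<psi> (- a) = - \<psi> a" using st_scaleC[of "-1" a] by (simp add: scaleC_minus1)
lemma st_diff: "\<psi> (a - b) = \<psi> a - \<psi> b" by (simp only: diff_conv_add_uminus st_add st_minus)
lemma st_scaleR: "\<psi> (r *\<^sub>R a) = r * \<psi> a" by (simp add: scaleR_scaleC st_scaleC)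

lemma st_cstar: "\<psi> (cstar x) = cnj (\<psi> x)"
proof -
  have key: "Im (1 + c * \<psi> x + cnj c * \<psi> (cstar x) + (cnj c * c) * \<psi> (cstar x * x)) = 0" for c
  proof -
    have "cstar (1 + c *\<^sub>C x) * (1 + c *\<^sub>C x) =
        1 + c *\<^sub>C x + cnj c *\<^sub>C cstar x + (cnj c * c) *\<^sub>C (cstar x * x)"
      by (simp add: cstar_add cstar_scaleC algebra_simps mult_scaleC_left mult_scaleC_right scaleC_scaleC scaleC_add_right)
    then have "\<psi> (cstar (1 + c *\<^sub>C x) * (1 + c *\<^sub>C x)) =
        1 + c * \<psi> x + cnj c * \<psi> (cstar x) + (cnj c * c) * \<psi> (cstar x * x)"
      by (simp add: st_add st_scaleC st_one)
    then show ?thesis using st_pos(1)[of "1 + c *\<^sub>C x"] by simp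
  qed
  have i0: "Im (\<psi> (cstar x * x)) = 0" by (rule st_pos)
  from key[of 1] i0 have "Im (\<psi> x) + Im (\<psi> (cstar x)) = 0" by simp
  moreover from key[of \<i>] i0 have "Re (\<psi> x) - Re (\<psi> (cstar x)) = 0" by simp
  ultimately show ?thesis by (simp add: complex_eq_iff)
qed

lemma st_bound: "Re (\<psi> (cstar a * a)) \<le> (norm a)\<^sup>2"
proof (cases "a = 0")
  case True then show ?thesis by (simp add: st_zero)
next
  case False
  then have na: "norm a > 0" by simp
  have "Re (\<psi> (cstar a * a)) \<le> (norm a)\<^sup>2 * 1"
  proof (rule le_by_approx)
    fix t :: real assume t: "0 < t" "t < 1"
    define c where "c = (t / norm a)\<^sup>2"
    define h where "h = c *\<^sub>R (cstar a * a)"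
    have hs: "cstar h = h" unfolding h_def by (simp add: cstar_scaleR cstar_mult cstar_cstar)
    have "norm h = c * (norm a)\<^sup>2" unfolding h_def c_def by (simp add: cstar_identity)
    also have "\<dots> = t\<^sup>2" unfolding c_def using na by (simp add: power_divide)
    also have "\<dots> < 1" using t by (simp add: power_less_one_iff)
    finally obtain z where z: "cstar z * z = 1 - h" using sqrt_one_minus[OF hs] by blast
    have "0 \<le> Re (\<psi> (cstar z * z))" by (rule st_pos)
    also have "\<psi> (cstar z * z) = 1 - c * \<psi> (cstar a * a)"
      unfolding z h_def by (simp add: st_diff st_one st_scaleR)
    finally have "c * Re (\<psi> (cstar a * a)) \<le> 1" by simp
    then have "(norm a)\<^sup>2 * (c * Re (\<psi> (cstar a * a))) \<le> (norm a)\<^sup>2 * 1"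
      by (rule mult_left_mono) simp
    moreover have "(norm a)\<^sup>2 * c = t\<^sup>2" unfolding c_def using na by (simp add: power_divide)
    ultimately show "t\<^sup>2 * Re (\<psi> (cstar a * a)) \<le> (norm a)\<^sup>2 * 1"
      by (simp add: mult.assoc[symmetric])
  qed
  then show ?thesis by simp
qed

end



context
  fixes \<pi> :: "'a::cstar_algebra \<Rightarrow> ('h::chilbert \<Rightarrow> 'h)"
  assumes rep: "unital_star_rep \<pi>"
begin

lemma rep_opm: "clinear_op_map \<pi>" using rep unfolding unital_star_rep_def by blast
lemma rep_one: "\<pi> 1 x = x" using rep unfolding unital_star_rep_def by simp
lemma rep_mult: "\<pi> (a * b) x = \<pi> a (\<pi> b x)" using rep unfolding unital_star_rep_def by simp
lemma rep_star: "\<pi> (cstar a) = hadj (\<pi> a)" using rep unfolding unital_star_rep_def by blast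

lemma rep_bound:
  assumes adj: "\<And>\<xi> \<eta>. cinner (\<pi> y \<xi>) \<eta> = cinner \<xi> (\<pi> (cstar y) \<eta>)"
  shows "(norm (\<pi> y \<xi>))\<^sup>2 \<le> norm (cstar y * y) * (norm \<xi>)\<^sup>2"
proof (rule ccontr)
  define R where "R = \<pi> y"
  define R' where "R' = \<pi> (cstar y)"
  define h where "h = cstar y * y"
  define Q where "Q = \<pi> h"
  define q where "q x = (norm (R x))\<^sup>2" for x
  define c where "c = norm h"
  assume "\<not> ?thesis"
  then have big: "q \<xi> > c * (norm \<xi>)\<^sup>2" unfolding q_def c_def h_def R_def by simp
  have opm: "clinear_op_map \<pi>" by (rule rep_opm)
  have Qx: "Q x = R' (R x)" for x unfolding Q_def h_def R_def R'_def by (rule rep_mult)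
  have adj': "cinner (R' a) b = cinner a (R b)" for a b
  proof -
    have "cinner (R' a) b = cnj (cinner b (R' a))" by (rule cinner_commute)
    also have "cinner b (R' a) = cinner (R b) a" unfolding R_def R'_def by (rule adj[symmetric])
    also have "cnj (cinner (R b) a) = cinner a (R b)" by (metis cinner_commute)
    finally show ?thesis .
  qed
  have iQ: "cinner x (Q x) = complex_of_real (q x)" for x
    unfolding Qx q_def R_def R'_def using adj[of x "R x"] by (simp add: R_def cinner_self)
  have Rlin: "R (r *\<^sub>R x) = r *\<^sub>R R x" for r x unfolding R_def by (rule om_lin_scaleR[OF opm])
  have qhom: "q (r *\<^sub>R x) = r\<^sup>2 * q x" for r x
    unfolding q_def Rlin by (simp add: power_mult_distrib)
  obtain K where K: "K > 0" "\<forall>x. norm (R x) \<le> K * norm x"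
    using bcl_bound[OF om_bcl[OF opm]] unfolding R_def by blast
  define S where "S = q ` {x. norm x = 1}"
  have \<xi>0: "\<xi> \<noteq> 0" using big unfolding q_def R_def by (auto simp: om_lin_zero[OF opm])
  define \<xi>1 where "\<xi>1 = (1 / norm \<xi>) *\<^sub>R \<xi>"
  have n\<xi>1: "norm \<xi>1 = 1" unfolding \<xi>1_def using \<xi>0 by simp
  have q\<xi>1: "q \<xi>1 = q \<xi> / (norm \<xi>)\<^sup>2" unfolding \<xi>1_def qhom by (simp add: power_divide)
  have S_ne: "S \<noteq> {}" unfolding S_def using n\<xi>1 by blast
  have S_bdd: "bdd_above S"
  proof (rule bdd_aboveI)
    fix s assume "s \<in> S"
    then obtain x where x: "norm x = 1" "s = q x" unfolding S_def by blast
    have "norm (R x) \<le> K" using K(2)[rule_format, of x] x by simp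
    then have "q x \<le> K\<^sup>2" unfolding q_def by (rule power_mono) simp
    then show "s \<le> K\<^sup>2" using x by simp
  qed
  define N where "N = Sup S"
  have qS: "q x \<le> N" if "norm x = 1" for x
    unfolding N_def by (rule cSup_upper[OF _ S_bdd]) (use that S_def in blast)
  have cN: "c < N"
  proof -
    have "c < q \<xi>1" unfolding q\<xi>1 using big \<xi>0 by (simp add: field_simps)
    also have "q \<xi>1 \<le> N" by (rule qS[OF n\<xi>1])
    finally show ?thesis .
  qed
  have c0: "0 \<le> c" unfolding c_def by simp
  have N0: "N > 0" using cN c0 by linarith
  have qN: "q x \<le> N * (norm x)\<^sup>2" for x
  proof (cases "x = 0")
    case True then show ?thesis unfolding q_def R_def by (simp add: om_lin_zero[OF opm])
  next
    case False
    have "q ((1 / norm x) *\<^sub>R x) \<le> N" by (rule qS) (use False in simp)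
    then show ?thesis unfolding qhom using False by (simp add: power_divide field_simps)
  qed
  have q0: "0 \<le> q x" for x unfolding q_def by simp
  have nQ: "(norm (Q x))\<^sup>2 \<le> N * q x" for x
  proof -
    have "(norm (Q x))\<^sup>2 = Re (cinner (Q x) (Q x))" by (simp add: Re_cinner_self)
    also have "cinner (Q x) (Q x) = cinner (R x) (R (Q x))" unfolding Qx[of x] by (simp add: adj')
    also have "Re (cinner (R x) (R (Q x))) \<le> norm (R x) * norm (R (Q x))"
      using cinner_cs[of "R x" "R (Q x)"] complex_Re_le_cmod[of "cinner (R x) (R (Q x))"] by linarith
    finally have a1: "(norm (Q x))\<^sup>2 \<le> norm (R x) * norm (R (Q x))" .
    have "norm (R (Q x)) = sqrt (q (Q x))" unfolding q_def by simp
    also have "sqrt (q (Q x)) \<le> sqrt (N * (norm (Q x))\<^sup>2)" by (rule real_sqrt_le_mono[OF qN])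
    also have "sqrt (N * (norm (Q x))\<^sup>2) = sqrt N * norm (Q x)" using N0 by (simp add: real_sqrt_mult)
    finally have a2: "norm (R (Q x)) \<le> sqrt N * norm (Q x)" .
    have a3: "norm (R x) = sqrt (q x)" unfolding q_def by simp
    have a4: "(norm (Q x))\<^sup>2 \<le> sqrt (q x) * (sqrt N * norm (Q x))"
      using a1 mult_left_mono[OF a2, of "norm (R x)"] a3 q0[of x] by simp
    show ?thesis
    proof (cases "Q x = 0")
      case True then show ?thesis using N0 q0[of x] by simp
    next
      case False
      have "norm (Q x) * norm (Q x) \<le> (sqrt (q x) * sqrt N) * norm (Q x)"
        using a4 by (simp add: power2_eq_square algebra_simps)
      then have "norm (Q x) \<le> sqrt (q x) * sqrt N" using False by simp
      then have "(norm (Q x))\<^sup>2 \<le> (sqrt (q x) * sqrt N)\<^sup>2" by (rule power_mono) simp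
      also have "\<dots> = q x * N" using q0[of x] N0 by (simp add: power_mult_distrib)
      finally show ?thesis by (simp add: mult.commute)
    qed
  qed
  have "norm h < N" using cN unfolding c_def .
  then obtain g where g: "g * (N *\<^sub>R 1 - h) = 1" using neumann_scaled by blast
  have inv: "\<pi> g (N *\<^sub>R x - Q x) = x" for x
  proof -
    have "x = \<pi> (g * (N *\<^sub>R 1 - h)) x" unfolding g by (simp add: rep_one)
    also have "\<dots> = \<pi> g (\<pi> (N *\<^sub>R 1 - h) x)" by (rule rep_mult)
    also have "\<pi> (N *\<^sub>R 1 - h) x = N *\<^sub>R x - Q x"
      unfolding Q_def by (simp add: om_diff[OF opm] om_scaleR[OF opm] rep_one)
    finally show ?thesis by simp
  qed
  obtain L where L: "L > 0" "\<forall>v. norm (\<pi> g v) \<le> L * norm v"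
    using bcl_bound[OF om_bcl[OF opm]] by blast
  define \<delta> where "\<delta> = 1 / (2 * L\<^sup>2 * N)"
  have \<delta>0: "\<delta> > 0" unfolding \<delta>_def using L N0 by simp
  have "N - \<delta> < Sup S" unfolding N_def[symmetric] using \<delta>0 by simp
  then obtain x where x: "norm x = 1" "N - \<delta> < q x"
    using less_cSup_iff[OF S_ne S_bdd] unfolding S_def by auto
  have e: "(norm (N *\<^sub>R x - Q x))\<^sup>2 = N\<^sup>2 - 2 * N * q x + (norm (Q x))\<^sup>2"
  proof -
    have "(norm (N *\<^sub>R x - Q x))\<^sup>2 = Re (cinner (N *\<^sub>R x - Q x) (N *\<^sub>R x - Q x))"
      by (simp add: Re_cinner_self)
    also have "cinner (N *\<^sub>R x - Q x) (N *\<^sub>R x - Q x) =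
        N * N * cinner x x - N * cinner x (Q x) - N * cinner (Q x) x + cinner (Q x) (Q x)"
      by (simp add: cinner_diff_left cinner_diff_right scaleR_scaleC cinner_scaleC_left cinner_scaleC_right algebra_simps)
    also have "cinner (Q x) x = cnj (cinner x (Q x))" by (rule cinner_commute)
    finally show ?thesis using x(1) by (simp add: iQ cinner_self power2_eq_square)
  qed
  have "(norm (N *\<^sub>R x - Q x))\<^sup>2 \<le> N * (N - q x)"
    unfolding e using nQ[of x] by (simp add: power2_eq_square algebra_simps)
  also have "\<dots> < N * \<delta>" using x(2) N0 by simp
  finally have sm: "(norm (N *\<^sub>R x - Q x))\<^sup>2 < N * \<delta>" .
  have "1 = norm (\<pi> g (N *\<^sub>R x - Q x))" using inv[of x] x(1) by simp
  also have "\<dots> \<le> L * norm (N *\<^sub>R x - Q x)" using L(2) by blast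
  finally have "1 \<le> (L * norm (N *\<^sub>R x - Q x))\<^sup>2" by (simp add: one_le_power)
  also have "\<dots> = L\<^sup>2 * (norm (N *\<^sub>R x - Q x))\<^sup>2" by (simp add: power_mult_distrib)
  also have "\<dots> \<le> L\<^sup>2 * (N * \<delta>)" using sm L by (intro mult_left_mono) auto
  also have "\<dots> = 1 / 2" unfolding \<delta>_def using L N0 by (simp add: field_simps)
  finally show False by simp
qed

end



lemma gamma_ineq:
  fixes W V X e P :: real
  assumes W0: "0 \<le> W" and WX: "W \<le> X" and V0: "0 \<le> V" and e0: "0 \<le> e"
    and P1: "1/2 \<le> P" and P2: "P \<le> 2" and PV: "P * W - e * X \<le> V"
  shows "W\<^sup>2 - V\<^sup>2 \<le> (\<bar>1 - P\<^sup>2\<bar> + 4 * e + 4 * e\<^sup>2) * X\<^sup>2"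
proof -
  have X0: "0 \<le> X" using W0 WX by linarith
  have t1: "(1 - P\<^sup>2) * W\<^sup>2 \<le> \<bar>1 - P\<^sup>2\<bar> * X\<^sup>2"
  proof -
    have "(1 - P\<^sup>2) * W\<^sup>2 \<le> \<bar>1 - P\<^sup>2\<bar> * W\<^sup>2" by (rule mult_right_mono) simp_all
    also have "\<dots> \<le> \<bar>1 - P\<^sup>2\<bar> * X\<^sup>2" by (rule mult_left_mono) (use W0 WX power_mono in auto)
    finally show ?thesis .
  qed
  show ?thesis
  proof (cases "e * X \<le> P * W")
    case True
    then have "(P * W - e * X)\<^sup>2 \<le> V\<^sup>2" using PV by (intro power_mono) simp_all
    then have "W\<^sup>2 - V\<^sup>2 \<le> W\<^sup>2 - (P * W - e * X)\<^sup>2" by linarith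
    also have "\<dots> = (1 - P\<^sup>2) * W\<^sup>2 + 2 * P * W * (e * X) - (e * X)\<^sup>2"
      by (simp add: power2_eq_square algebra_simps)
    also have "\<dots> \<le> \<bar>1 - P\<^sup>2\<bar> * X\<^sup>2 + 4 * e * X\<^sup>2"
    proof -
      have "2 * P * W * (e * X) \<le> 2 * 2 * X * (e * X)"
        using P1 P2 W0 WX e0 X0 by (intro mult_right_mono mult_mono) auto
      then have "2 * P * W * (e * X) \<le> 4 * e * X\<^sup>2" by (simp add: power2_eq_square algebra_simps)
      moreover have "0 \<le> (e * X)\<^sup>2" by simp
      ultimately show ?thesis using t1 by linarith
    qed
    also have "\<dots> \<le> (\<bar>1 - P\<^sup>2\<bar> + 4 * e + 4 * e\<^sup>2) * X\<^sup>2"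
      using e0 X0 by (simp add: algebra_simps)
    finally show ?thesis .
  next
    case False
    then have "P * W < e * X" by simp
    then have "W \<le> 2 * e * X"
    proof -
      have "W / 2 \<le> P * W" using P1 W0 by (simp add: mult_right_mono[of "1/2" P W, simplified])
      then show ?thesis using \<open>P * W < e * X\<close> by linarith
    qed
    then have "W\<^sup>2 \<le> (2 * e * X)\<^sup>2" using W0 by (intro power_mono) auto
    then have "W\<^sup>2 \<le> 4 * e\<^sup>2 * X\<^sup>2" by (simp add: power_mult_distrib)
    then have "W\<^sup>2 - V\<^sup>2 \<le> 4 * e\<^sup>2 * X\<^sup>2" using zero_le_power2[of V] by linarith
    also have "\<dots> \<le> (\<bar>1 - P\<^sup>2\<bar> + 4 * e + 4 * e\<^sup>2) * X\<^sup>2"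
      using e0 X0 by (simp add: algebra_simps)
    finally show ?thesis .
  qed
qed

lemma norm_by_inner:
  fixes z :: "'h::chilbert"
  assumes B0: "0 \<le> B" and h: "\<And>\<eta>. cmod (cinner \<eta> z) \<le> B * norm \<eta>"
  shows "norm z \<le> B"
proof (cases "z = 0")
  case True then show ?thesis using B0 by simp
next
  case False
  have "(norm z)\<^sup>2 = cmod (cinner z z)" by (simp only: cinner_self norm_of_real) simp
  also have "\<dots> \<le> B * norm z" by (rule h)
  finally have "norm z * norm z \<le> B * norm z" by (simp add: power2_eq_square)
  then show ?thesis using False by simp
qed

lemma sqrt_bound_aux:
  fixes a b c :: real
  assumes "a\<^sup>2 \<le> b * c\<^sup>2" "0 \<le> a" "0 \<le> c"
  shows "a \<le> sqrt b * c"
proof -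
  have "a = sqrt (a\<^sup>2)" using assms by simp
  also have "\<dots> \<le> sqrt (b * c\<^sup>2)" by (rule real_sqrt_le_mono) fact
  also have "\<dots> = sqrt b * c" using assms by (simp add: real_sqrt_mult)
  finally show ?thesis .
qed

definition bb :: "('a::cstar_algebra \<Rightarrow> complex) \<Rightarrow> (nat \<Rightarrow> 'a) \<Rightarrow> nat \<Rightarrow> 'a" where
  "bb \<psi> \<Delta> m = cstar (\<Delta> m - \<psi> (\<Delta> m) *\<^sub>C 1) * (\<Delta> m - \<psi> (\<Delta> m) *\<^sub>C 1)"

definition ee :: "('a::cstar_algebra \<Rightarrow> complex) \<Rightarrow> (nat \<Rightarrow> 'a) \<Rightarrow> nat \<Rightarrow> nat \<Rightarrow> real" where
  "ee \<psi> \<Delta> m n = sqrt (norm (cstar (\<Delta> n) * bb \<psi> \<Delta> m * \<Delta> n))"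

definition gam :: "('a::cstar_algebra \<Rightarrow> complex) \<Rightarrow> (nat \<Rightarrow> 'a) \<Rightarrow> nat \<Rightarrow> nat \<Rightarrow> real" where
  "gam \<psi> \<Delta> m n = \<bar>1 - (cmod (\<psi> (\<Delta> m)))\<^sup>2\<bar> + 4 * ee \<psi> \<Delta> m n + 4 * (ee \<psi> \<Delta> m n)\<^sup>2"

lemma prod_bound:
  fixes x g1 g2 a1 a2 :: real
  assumes "x\<^sup>2 \<le> g1 * g2" "0 \<le> g1" "g1 \<le> a1\<^sup>2" "0 \<le> g2" "g2 \<le> a2\<^sup>2" "0 \<le> a1" "0 \<le> a2"
  shows "x \<le> a1 * a2"
proof -
  have "g1 * g2 \<le> a1\<^sup>2 * a2\<^sup>2" using assms by (intro mult_mono) auto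
  then have "x\<^sup>2 \<le> (a1 * a2)\<^sup>2" using assms(1) by (simp add: power_mult_distrib)
  show ?thesis
  proof (cases "x \<le> 0")
    case True then show ?thesis using assms(6,7) by (meson mult_nonneg_nonneg order.trans)
  next
    case False
    have "0 \<le> a1 * a2" using assms(6,7) by simp
    then show ?thesis by (rule power2_le_imp_le[OF \<open>x\<^sup>2 \<le> (a1 * a2)\<^sup>2\<close>])
  qed
qed

lemma choose_delta:
  fixes H :: "real \<Rightarrow> real"
  assumes lim: "(H \<longlongrightarrow> L) (at_right 0)" and e: "\<epsilon> > 0"
  shows "\<exists>\<delta>. 0 < \<delta> \<and> \<delta> < 1/4 \<and> H \<delta> < L + \<epsilon>"
proof -
  have "eventually (\<lambda>\<delta>. H \<delta> < L + \<epsilon>) (at_right 0)"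
    using lim e by (intro order_tendstoD(2)) auto
  moreover have "eventually (\<lambda>\<delta>::real. 0 < \<delta> \<and> \<delta> < 1/4) (at_right 0)"
    by (rule eventually_at_rightI[of 0 "1/4"]) auto
  ultimately have "eventually (\<lambda>\<delta>. 0 < \<delta> \<and> \<delta> < 1/4 \<and> H \<delta> < L + \<epsilon>) (at_right (0::real))"
    by eventually_elim auto
  then show ?thesis by (rule eventually_happens'[rotated]) simp
qed

lemma onorm_nonneg_bound:
  assumes "\<And>x. norm (f x) \<le> b * norm x"
  shows "0 \<le> onorm f"
proof -
  have "bdd_above (range (\<lambda>x. norm (f x) / norm x))"
  proof (rule bdd_aboveI2)
    fix x show "norm (f x) / norm x \<le> \<bar>b\<bar>"
    proof (cases "x = 0")
      case True then show ?thesis by simp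
    next
      case False
      have "b * norm x \<le> \<bar>b\<bar> * norm x" by (rule mult_right_mono) simp_all
      then have "norm (f x) \<le> \<bar>b\<bar> * norm x" using assms[of x] by linarith
      then show ?thesis using False by (simp add: divide_le_eq)
    qed
  qed
  then have "norm (f 0) / norm 0 \<le> (SUP x. norm (f x) / norm x)"
    using cSUP_upper[of 0 UNIV "\<lambda>x. norm (f x) / norm x"] by simp
  then have "norm (f 0) / norm 0 \<le> onorm f" unfolding onorm_def .
  then show ?thesis by simp
qed

definition H2 :: "real \<Rightarrow> real \<Rightarrow> real" where
  "H2 na \<delta> = na * (2 * sqrt (6 * \<delta>) + 6 * \<delta>) + 2 * na * sqrt (27 * \<delta> + 4 * sqrt (6 * \<delta>)) + \<delta>"

definition H1 :: "real \<Rightarrow> real \<Rightarrow> real \<Rightarrow> real" where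
  "H1 s na \<delta> = (sqrt (s + \<delta>) + na * sqrt (27 * \<delta> + 4 * sqrt (6 * \<delta>)) + na * sqrt (6 * \<delta>)) / (1 - \<delta>)"

lemma H2_lim: "(H2 na \<longlongrightarrow> 0) (at_right 0)"
proof -
  have "((\<lambda>\<delta>. na * (2 * sqrt (6 * \<delta>) + 6 * \<delta>) + 2 * na * sqrt (27 * \<delta> + 4 * sqrt (6 * \<delta>)) + \<delta>)
     \<longlongrightarrow> na * (2 * sqrt (6 * 0) + 6 * 0) + 2 * na * sqrt (27 * 0 + 4 * sqrt (6 * 0)) + 0) (at_right (0::real))"
    by (intro tendsto_intros)
  then show ?thesis unfolding H2_def[abs_def] by simp
qed

lemma H1_lim: "0 \<le> s \<Longrightarrow> (H1 s na \<longlongrightarrow> sqrt s) (at_right 0)"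
proof -
  have "((\<lambda>\<delta>. (sqrt (s + \<delta>) + na * sqrt (27 * \<delta> + 4 * sqrt (6 * \<delta>)) + na * sqrt (6 * \<delta>)) / (1 - \<delta>))
     \<longlongrightarrow> (sqrt (s + 0) + na * sqrt (27 * 0 + 4 * sqrt (6 * 0)) + na * sqrt (6 * 0)) / (1 - 0)) (at_right (0::real))"
    by (intro tendsto_intros) auto
  then show ?thesis unfolding H1_def[abs_def] by simp
qed

context
  fixes S :: "'a::cstar_algebra set"
    and \<pi> \<Phi> :: "'a \<Rightarrow> ('h::chilbert \<Rightarrow> 'h)"
    and \<psi> :: "'a \<Rightarrow> complex"
    and \<Delta> :: "nat \<Rightarrow> 'a"
  assumes os: "operator_system S"
    and rep: "unital_star_rep \<pi>"
    and u: "ucp \<Phi>"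
    and agree: "\<forall>x\<in>S. \<Phi> x = \<pi> x"
    and st: "cstate \<psi>"
    and cs: "characteristic_sequence \<psi> \<Delta>"
    and DS: "\<forall>n. \<Delta> n \<in> S"
begin

lemma S_one: "1 \<in> S" using os unfolding operator_system_def by blast
lemma S_add: "x \<in> S \<Longrightarrow> y \<in> S \<Longrightarrow> x + y \<in> S" using os unfolding operator_system_def by blast
lemma S_scaleC: "x \<in> S \<Longrightarrow> c *\<^sub>C x \<in> S" using os unfolding operator_system_def by blast
lemma S_cstar: "x \<in> S \<Longrightarrow> cstar x \<in> S" using os unfolding operator_system_def by blast
lemma S_diff: "x \<in> S \<Longrightarrow> y \<in> S \<Longrightarrow> x - y \<in> S"
proof -
  assume "x \<in> S" "y \<in> S"
  then have "x + (-1) *\<^sub>C y \<in> S" by (intro S_add S_scaleC)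
  then show ?thesis by (simp add: scaleC_minus1)
qed

lemma nD: "norm (\<Delta> n) = 1" using cs unfolding characteristic_sequence_def by blast
lemma pconv: "(\<lambda>n. \<psi> (\<Delta> n)) \<longlonglongrightarrow> 1" using cs unfolding characteristic_sequence_def by blast
lemma climsup: "limsup (\<lambda>n. ereal (norm (cstar (\<Delta> n) * a * \<Delta> n))) \<le> ereal (cmod (\<psi> a))"
  using cs unfolding characteristic_sequence_def by blast

lemma agreeS: "x \<in> S \<Longrightarrow> \<pi> x = \<Phi> x" using agree by simp

lemmas UL = L[OF u]

lemma approx:
  "norm (\<Phi> (\<Delta> m) (\<Phi> (\<Delta> n) \<xi>) - \<psi> (\<Delta> m) *\<^sub>C \<Phi> (\<Delta> n) \<xi>)
     \<le> sqrt (norm (cstar (\<Delta> n) * bb \<psi> \<Delta> m * \<Delta> n)) * norm \<xi>"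
proof -
  define c where "c = \<psi> (\<Delta> m)"
  define D where "D = \<Delta> m - c *\<^sub>C 1"
  define y where "y = D * \<Delta> n"
  have DS': "D \<in> S" unfolding D_def by (intro S_diff S_scaleC S_one DS[rule_format])
  have Dn: "\<Delta> n \<in> S" using DS by blast
  have pi_y: "\<pi> y x = \<Phi> D (\<Phi> (\<Delta> n) x)" for x
    unfolding y_def rep_mult[OF rep] agreeS[OF DS'] agreeS[OF Dn] ..
  have pi_ys: "\<pi> (cstar y) x = \<Phi> (cstar (\<Delta> n)) (\<Phi> (cstar D) x)" for x
    unfolding y_def cstar_mult rep_mult[OF rep] agreeS[OF S_cstar[OF DS']] agreeS[OF S_cstar[OF Dn]] ..
  have adj: "cinner (\<pi> y \<xi>') \<eta> = cinner \<xi>' (\<pi> (cstar y) \<eta>)" for \<xi>' \<eta>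
    unfolding pi_y pi_ys u_adj[OF u] ..
  have "(norm (\<pi> y \<xi>))\<^sup>2 \<le> norm (cstar y * y) * (norm \<xi>)\<^sup>2"
    by (rule rep_bound[OF rep adj])
  moreover have "cstar y * y = cstar (\<Delta> n) * bb \<psi> \<Delta> m * \<Delta> n"
    unfolding y_def bb_def D_def c_def by (simp add: cstar_mult mult.assoc)
  moreover have "\<pi> y \<xi> = \<Phi> (\<Delta> m) (\<Phi> (\<Delta> n) \<xi>) - c *\<^sub>C \<Phi> (\<Delta> n) \<xi>"
    unfolding pi_y D_def by (simp add: UL)
  ultimately show ?thesis unfolding c_def by (intro sqrt_bound_aux) auto
qed

lemma psi_bb: "cmod (\<psi> (bb \<psi> \<Delta> m)) \<le> 1 - (cmod (\<psi> (\<Delta> m)))\<^sup>2"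
proof -
  define c where "c = \<psi> (\<Delta> m)"
  have e: "bb \<psi> \<Delta> m = cstar (\<Delta> m) * \<Delta> m - c *\<^sub>C cstar (\<Delta> m) - cnj c *\<^sub>C \<Delta> m + (cnj c * c) *\<^sub>C 1"
    unfolding bb_def c_def[symmetric]
    by (simp add: cstar_diff cstar_scaleC algebra_simps mult_scaleC_left mult_scaleC_right scaleC_scaleC
        scaleC_diff_right)
  have "\<psi> (bb \<psi> \<Delta> m) = \<psi> (cstar (\<Delta> m) * \<Delta> m) - c * cnj c - cnj c * c + cnj c * c"
    unfolding e by (simp add: st_add[OF st] st_diff[OF st] st_scaleC[OF st] st_one[OF st] st_cstar[OF st] c_def)
  then have e2: "\<psi> (bb \<psi> \<Delta> m) = \<psi> (cstar (\<Delta> m) * \<Delta> m) - complex_of_real ((cmod c)\<^sup>2)"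
    by (simp add: complex_mult_cnj cmod_power2)
  have im: "Im (\<psi> (bb \<psi> \<Delta> m)) = 0" unfolding bb_def by (rule st_pos[OF st])
  have re: "0 \<le> Re (\<psi> (bb \<psi> \<Delta> m))" unfolding bb_def by (rule st_pos[OF st])
  have "cmod (\<psi> (bb \<psi> \<Delta> m)) = Re (\<psi> (bb \<psi> \<Delta> m))" using im re by (simp add: cmod_def)
  also have "\<dots> = Re (\<psi> (cstar (\<Delta> m) * \<Delta> m)) - (cmod c)\<^sup>2" unfolding e2 by simp
  also have "\<dots> \<le> (norm (\<Delta> m))\<^sup>2 - (cmod c)\<^sup>2" using st_bound[OF st, of "\<Delta> m"] by simp
  finally show ?thesis unfolding c_def nD by simp
qed

lemma e_eventually:
  assumes "1 - (cmod (\<psi> (\<Delta> m)))\<^sup>2 < \<eta>"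
  shows "eventually (\<lambda>n. norm (cstar (\<Delta> n) * bb \<psi> \<Delta> m * \<Delta> n) < \<eta>) sequentially"
proof -
  have "ereal (cmod (\<psi> (bb \<psi> \<Delta> m))) < ereal \<eta>" using psi_bb[of m] assms by simp
  with climsup[of "bb \<psi> \<Delta> m"]
  have "limsup (\<lambda>n. ereal (norm (cstar (\<Delta> n) * bb \<psi> \<Delta> m * \<Delta> n))) < ereal \<eta>"
    by (rule le_less_trans)
  then show ?thesis by (auto dest: Limsup_lessD)
qed


lemma ee_nonneg: "0 \<le> ee \<psi> \<Delta> m n" unfolding ee_def by simp
lemma gam_nonneg: "0 \<le> gam \<psi> \<Delta> m n" unfolding gam_def using ee_nonneg[of m n] by simp

lemma approx': "norm (\<Phi> (\<Delta> m) (\<Phi> (\<Delta> n) \<xi>) - \<psi> (\<Delta> m) *\<^sub>C \<Phi> (\<Delta> n) \<xi>) \<le> ee \<psi> \<Delta> m n * norm \<xi>"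
  unfolding ee_def by (rule approx)

lemma T_contr: "norm (\<Phi> (\<Delta> n) x) \<le> norm x"
  using u_contr[OF u, of "\<Delta> n" x] nD by simp

lemma Gbound:
  assumes P1: "1/2 \<le> cmod (\<psi> (\<Delta> m))" and P2: "cmod (\<psi> (\<Delta> m)) \<le> 2"
  shows "Gf \<Phi> (\<Delta> m) (\<Phi> (\<Delta> n) \<xi>) \<le> gam \<psi> \<Delta> m n * (norm \<xi>)\<^sup>2"
proof -
  define w where "w = \<Phi> (\<Delta> n) \<xi>"
  define v where "v = \<Phi> (\<Delta> m) w"
  define p where "p = \<psi> (\<Delta> m)"
  have d: "norm (v - p *\<^sub>C w) \<le> ee \<psi> \<Delta> m n * norm \<xi>" unfolding v_def w_def p_def by (rule approx')
  have "cmod p * norm w = norm (p *\<^sub>C w)" by (simp add: norm_scaleC)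
  also have "p *\<^sub>C w = v - (v - p *\<^sub>C w)" by simp
  also have "norm (v - (v - p *\<^sub>C w)) \<le> norm v + norm (v - p *\<^sub>C w)" by (rule norm_triangle_ineq4)
  finally have PV: "cmod p * norm w - ee \<psi> \<Delta> m n * norm \<xi> \<le> norm v" using d by linarith
  have "Gf \<Phi> (\<Delta> m) w \<le> (norm (\<Delta> m))\<^sup>2 * (norm w)\<^sup>2 - (norm v)\<^sup>2"
    unfolding v_def by (rule Gf_le[OF u])
  also have "\<dots> = (norm w)\<^sup>2 - (norm v)\<^sup>2" by (simp add: nD)
  also have "\<dots> \<le> (\<bar>1 - (cmod p)\<^sup>2\<bar> + 4 * ee \<psi> \<Delta> m n + 4 * (ee \<psi> \<Delta> m n)\<^sup>2) * (norm \<xi>)\<^sup>2"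
    by (rule gamma_ineq) (use PV P1 P2 ee_nonneg[of m n] T_contr[of n \<xi>] in \<open>simp_all add: w_def p_def\<close>)
  finally show ?thesis unfolding w_def gam_def p_def .
qed

lemma Gf_cstar_le: "Gf \<Phi> (cstar a) x \<le> (norm a * norm x)\<^sup>2"
proof -
  have "Gf \<Phi> (cstar a) x \<le> (norm a)\<^sup>2 * (norm x)\<^sup>2"
    using Gf_le[OF u, of "cstar a" x] zero_le_power2[of "norm (\<Phi> (cstar a) x)"] by (simp only: norm_cstar)
  then show ?thesis by (simp add: power_mult_distrib)
qed

lemma Gf_le': "Gf \<Phi> a x \<le> (norm a * norm x)\<^sup>2"
proof -
  have "Gf \<Phi> a x \<le> (norm a)\<^sup>2 * (norm x)\<^sup>2"
    using Gf_le[OF u, of a x] zero_le_power2[of "norm (\<Phi> a x)"] by linarith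
  then show ?thesis by (simp add: power_mult_distrib)
qed

lemma core1:
  assumes P1: "1/2 \<le> cmod (\<psi> (\<Delta> m))" and P2: "cmod (\<psi> (\<Delta> m)) \<le> 2"
  shows "cmod (\<psi> (\<Delta> m)) * norm (\<Phi> a (\<Phi> (\<Delta> n) \<xi>))
     \<le> (norm (a * \<Delta> m) + norm a * sqrt (gam \<psi> \<Delta> m n) + norm a * ee \<psi> \<Delta> m n) * norm \<xi>"
proof -
  define w where "w = \<Phi> (\<Delta> n) \<xi>"
  define v where "v = \<Phi> (\<Delta> m) w"
  define p where "p = \<psi> (\<Delta> m)"
  define e where "e = ee \<psi> \<Delta> m n"
  define g where "g = gam \<psi> \<Delta> m n"
  define X where "X = norm \<xi>"
  have e0: "0 \<le> e" unfolding e_def by (rule ee_nonneg)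
  have g0: "0 \<le> g" unfolding g_def by (rule gam_nonneg)
  have X0: "0 \<le> X" unfolding X_def by simp
  have wX: "norm w \<le> X" unfolding w_def X_def by (rule T_contr)
  have d: "norm (v - p *\<^sub>C w) \<le> e * X" unfolding v_def w_def p_def e_def X_def by (rule approx')
  have Gw: "Gf \<Phi> (\<Delta> m) w \<le> (sqrt g * X)\<^sup>2"
    using Gbound[OF P1 P2, of n \<xi>] g0 unfolding w_def g_def X_def by (simp add: power_mult_distrib)
  have Fv: "norm (\<Phi> a v) \<le> (norm (a * \<Delta> m) + norm a * sqrt g) * X"
  proof (rule norm_by_inner)
    show "0 \<le> (norm (a * \<Delta> m) + norm a * sqrt g) * X" using g0 X0 by simp
  next
    fix \<eta>
    have i1: "cinner \<eta> (\<Phi> a v) = cinner (\<Phi> (cstar a) \<eta>) (\<Phi> (\<Delta> m) w)"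
      unfolding v_def by (simp add: u_adj[OF u] cstar_cstar)
    have "(cmod (cinner \<eta> (\<Phi> (cstar (cstar a) * \<Delta> m) w) - cinner (\<Phi> (cstar a) \<eta>) (\<Phi> (\<Delta> m) w)))\<^sup>2
        \<le> Gf \<Phi> (cstar a) \<eta> * Gf \<Phi> (\<Delta> m) w" by (rule schur[OF u])
    then have s1: "cmod (cinner \<eta> (\<Phi> (a * \<Delta> m) w) - cinner \<eta> (\<Phi> a v)) \<le> (norm a * norm \<eta>) * (sqrt g * X)"
      unfolding i1 cstar_cstar
    proof (rule prod_bound)
      show "0 \<le> Gf \<Phi> (cstar a) \<eta>" by (rule Gf_nonneg[OF u])
      show "Gf \<Phi> (cstar a) \<eta> \<le> (norm a * norm \<eta>)\<^sup>2" by (rule Gf_cstar_le)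
      show "0 \<le> Gf \<Phi> (\<Delta> m) w" by (rule Gf_nonneg[OF u])
      show "Gf \<Phi> (\<Delta> m) w \<le> (sqrt g * X)\<^sup>2" by (rule Gw)
      show "0 \<le> norm a * norm \<eta>" by simp
      show "0 \<le> sqrt g * X" using g0 X0 by simp
    qed
    have s2: "cmod (cinner \<eta> (\<Phi> (a * \<Delta> m) w)) \<le> norm \<eta> * (norm (a * \<Delta> m) * X)"
    proof -
      have "cmod (cinner \<eta> (\<Phi> (a * \<Delta> m) w)) \<le> norm \<eta> * norm (\<Phi> (a * \<Delta> m) w)" by (rule cinner_cs)
      also have "norm (\<Phi> (a * \<Delta> m) w) \<le> norm (a * \<Delta> m) * norm w" by (rule u_contr[OF u])
      also have "\<dots> \<le> norm (a * \<Delta> m) * X" using wX by (simp add: mult_left_mono)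
      finally show ?thesis by (simp add: mult_left_mono)
    qed
    have "cmod (cinner \<eta> (\<Phi> a v)) \<le> cmod (cinner \<eta> (\<Phi> (a * \<Delta> m) w)) +
        cmod (cinner \<eta> (\<Phi> (a * \<Delta> m) w) - cinner \<eta> (\<Phi> a v))"
    proof -
      define A where "A = cinner \<eta> (\<Phi> (a * \<Delta> m) w)"
      have "cinner \<eta> (\<Phi> a v) = A - (A - cinner \<eta> (\<Phi> a v))" by simp
      then have "cmod (cinner \<eta> (\<Phi> a v)) = cmod (A - (A - cinner \<eta> (\<Phi> a v)))" by simp
      also have "\<dots> \<le> cmod A + cmod (A - cinner \<eta> (\<Phi> a v))" by (rule norm_triangle_ineq4)
      finally show ?thesis unfolding A_def .
    qed
    also have "\<dots> \<le> norm \<eta> * (norm (a * \<Delta> m) * X) + (norm a * norm \<eta>) * (sqrt g * X)"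
      using s1 s2 by linarith
    finally show "cmod (cinner \<eta> (\<Phi> a v)) \<le> (norm (a * \<Delta> m) + norm a * sqrt g) * X * norm \<eta>"
      by (simp add: algebra_simps)
  qed
  have "cmod p * norm (\<Phi> a w) = norm (\<Phi> a (p *\<^sub>C w))" by (simp add: UL norm_scaleC)
  also have "\<Phi> a (p *\<^sub>C w) = \<Phi> a v - \<Phi> a (v - p *\<^sub>C w)" by (simp add: UL)
  also have "norm (\<Phi> a v - \<Phi> a (v - p *\<^sub>C w)) \<le> norm (\<Phi> a v) + norm (\<Phi> a (v - p *\<^sub>C w))"
    by (rule norm_triangle_ineq4)
  also have "norm (\<Phi> a (v - p *\<^sub>C w)) \<le> norm a * (e * X)"
    using u_contr[OF u, of a "v - p *\<^sub>C w"] d mult_left_mono[OF d, of "norm a"] by simp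
  finally show ?thesis using Fv unfolding w_def[symmetric] p_def[symmetric] e_def[symmetric] g_def[symmetric] X_def[symmetric]
    by (simp add: algebra_simps)
qed


lemma mono3:
  fixes a A b B n :: real
  assumes "0 \<le> a" "a \<le> A" "0 \<le> b" "b \<le> B" "0 \<le> n"
  shows "a * (n * b) \<le> A * (n * B)"
  using assms by (intro mult_mono mult_left_mono) auto

lemma cmod_tri3:
  fixes A B C :: complex
  shows "cmod A \<le> cmod B + cmod (A - B)"
proof -
  have "A = B + (A - B)" by simp
  then have "cmod A = cmod (B + (A - B))" by simp
  also have "\<dots> \<le> cmod B + cmod (A - B)" by (rule norm_triangle_ineq)
  finally show ?thesis .
qed

lemma core2:
  assumes P1: "1/2 \<le> cmod (\<psi> (\<Delta> m))" and P2: "cmod (\<psi> (\<Delta> m)) \<le> 2"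
  shows "(cmod (\<psi> (\<Delta> m)))\<^sup>2 * cmod (cinner (\<Phi> (\<Delta> n) \<xi>') (\<Phi> a (\<Phi> (\<Delta> n) \<xi>)))
     \<le> (norm a * (2 * ee \<psi> \<Delta> m n + (ee \<psi> \<Delta> m n)\<^sup>2) + 2 * norm a * sqrt (gam \<psi> \<Delta> m n)
          + norm (cstar (\<Delta> m) * a * \<Delta> m)) * norm \<xi> * norm \<xi>'"
proof -
  define w where "w = \<Phi> (\<Delta> n) \<xi>"
  define w' where "w' = \<Phi> (\<Delta> n) \<xi>'"
  define v where "v = \<Phi> (\<Delta> m) w"
  define v' where "v' = \<Phi> (\<Delta> m) w'"
  define p where "p = \<psi> (\<Delta> m)"
  define e where "e = ee \<psi> \<Delta> m n"
  define g where "g = gam \<psi> \<Delta> m n"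
  define X where "X = norm \<xi>"
  define X' where "X' = norm \<xi>'"
  define d where "d = v - p *\<^sub>C w"
  define d' where "d' = v' - p *\<^sub>C w'"
  define na where "na = norm a"
  have e0: "0 \<le> e" unfolding e_def by (rule ee_nonneg)
  have g0: "0 \<le> g" unfolding g_def by (rule gam_nonneg)
  have X0: "0 \<le> X" unfolding X_def by simp
  have X0': "0 \<le> X'" unfolding X'_def by simp
  have na0: "0 \<le> na" unfolding na_def by simp
  have wX: "norm w \<le> X" unfolding w_def X_def by (rule T_contr)
  have wX': "norm w' \<le> X'" unfolding w'_def X'_def by (rule T_contr)
  have vX: "norm v \<le> X" unfolding v_def using T_contr[of m w] wX by simp
  have vX': "norm v' \<le> X'" unfolding v'_def using T_contr[of m w'] wX' by simp
  have dX: "norm d \<le> e * X" unfolding d_def v_def w_def p_def e_def X_def by (rule approx')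
  have dX': "norm d' \<le> e * X'" unfolding d'_def v'_def w'_def p_def e_def X'_def by (rule approx')
  have Gw: "Gf \<Phi> (\<Delta> m) w \<le> (sqrt g * X)\<^sup>2"
    using Gbound[OF P1 P2, of n \<xi>] g0 unfolding w_def g_def X_def by (simp add: power_mult_distrib)
  have Gw': "Gf \<Phi> (\<Delta> m) w' \<le> (sqrt g * X')\<^sup>2"
    using Gbound[OF P1 P2, of n \<xi>'] g0 unfolding w'_def g_def X'_def by (simp add: power_mult_distrib)
  have bnd: "cmod (cinner x (\<Phi> a y)) \<le> norm x * (na * norm y)" for x y
  proof -
    have "cmod (cinner x (\<Phi> a y)) \<le> norm x * norm (\<Phi> a y)" by (rule cinner_cs)
    also have "\<dots> \<le> norm x * (na * norm y)" unfolding na_def by (rule mult_left_mono[OF u_contr[OF u]]) simp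
    finally show ?thesis .
  qed
  have i1: "cinner v' (\<Phi> a v) = cinner (\<Phi> (cstar a) v') (\<Phi> (\<Delta> m) w)"
    unfolding v_def by (simp add: u_adj[OF u] cstar_cstar)
  have "(cmod (cinner v' (\<Phi> (cstar (cstar a) * \<Delta> m) w) - cinner (\<Phi> (cstar a) v') (\<Phi> (\<Delta> m) w)))\<^sup>2
      \<le> Gf \<Phi> (cstar a) v' * Gf \<Phi> (\<Delta> m) w" by (rule schur[OF u])
  then have s1: "cmod (cinner v' (\<Phi> (a * \<Delta> m) w) - cinner v' (\<Phi> a v)) \<le> (na * X') * (sqrt g * X)"
    unfolding i1 cstar_cstar
  proof (rule prod_bound)
    show "0 \<le> Gf \<Phi> (cstar a) v'" by (rule Gf_nonneg[OF u])
    have "Gf \<Phi> (cstar a) v' \<le> (norm a * norm v')\<^sup>2" by (rule Gf_cstar_le)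
    also have "\<dots> \<le> (na * X')\<^sup>2" unfolding na_def using vX' by (intro power_mono mult_left_mono) auto
    finally show "Gf \<Phi> (cstar a) v' \<le> (na * X')\<^sup>2" .
    show "0 \<le> Gf \<Phi> (\<Delta> m) w" by (rule Gf_nonneg[OF u])
    show "Gf \<Phi> (\<Delta> m) w \<le> (sqrt g * X)\<^sup>2" by (rule Gw)
    show "0 \<le> na * X'" using na0 X0' by simp
    show "0 \<le> sqrt g * X" using g0 X0 by simp
  qed
  have i2: "cinner v' (\<Phi> (a * \<Delta> m) w) = cinner (\<Phi> (\<Delta> m) w') (\<Phi> (a * \<Delta> m) w)"
    unfolding v'_def ..
  have "(cmod (cinner w' (\<Phi> (cstar (\<Delta> m) * (a * \<Delta> m)) w) - cinner (\<Phi> (\<Delta> m) w') (\<Phi> (a * \<Delta> m) w)))\<^sup>2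
      \<le> Gf \<Phi> (\<Delta> m) w' * Gf \<Phi> (a * \<Delta> m) w" by (rule schur[OF u])
  then have s2': "cmod (cinner w' (\<Phi> (cstar (\<Delta> m) * (a * \<Delta> m)) w) - cinner v' (\<Phi> (a * \<Delta> m) w)) \<le> (sqrt g * X') * (na * X)"
    unfolding i2
  proof (rule prod_bound)
    show "0 \<le> Gf \<Phi> (\<Delta> m) w'" by (rule Gf_nonneg[OF u])
    show "Gf \<Phi> (\<Delta> m) w' \<le> (sqrt g * X')\<^sup>2" by (rule Gw')
    show "0 \<le> Gf \<Phi> (a * \<Delta> m) w" by (rule Gf_nonneg[OF u])
    have "Gf \<Phi> (a * \<Delta> m) w \<le> (norm (a * \<Delta> m) * norm w)\<^sup>2" by (rule Gf_le')
    also have "norm (a * \<Delta> m) \<le> na" unfolding na_def using norm_mult_ineq[of a "\<Delta> m"] nD by simp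
    then have "(norm (a * \<Delta> m) * norm w)\<^sup>2 \<le> (na * X)\<^sup>2" using wX na0 by (intro power_mono mult_mono) auto
    finally show "Gf \<Phi> (a * \<Delta> m) w \<le> (na * X)\<^sup>2" .
    show "0 \<le> sqrt g * X'" using g0 X0' by simp
    show "0 \<le> na * X" using na0 X0 by simp
  qed
  have s2: "cmod (cinner w' (\<Phi> (cstar (\<Delta> m) * a * \<Delta> m) w) - cinner v' (\<Phi> (a * \<Delta> m) w)) \<le> (sqrt g * X') * (na * X)"
    using s2' by (simp only: mult.assoc)
  have s3: "cmod (cinner w' (\<Phi> (cstar (\<Delta> m) * a * \<Delta> m) w)) \<le> norm (cstar (\<Delta> m) * a * \<Delta> m) * X * X'"
  proof -
    have "cmod (cinner w' (\<Phi> (cstar (\<Delta> m) * a * \<Delta> m) w)) \<le> norm w' * norm (\<Phi> (cstar (\<Delta> m) * a * \<Delta> m) w)"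
      by (rule cinner_cs)
    also have "\<dots> \<le> X' * (norm (cstar (\<Delta> m) * a * \<Delta> m) * X)"
    proof (rule mult_mono)
      show "norm (\<Phi> (cstar (\<Delta> m) * a * \<Delta> m) w) \<le> norm (cstar (\<Delta> m) * a * \<Delta> m) * X"
        using u_contr[OF u, of "cstar (\<Delta> m) * a * \<Delta> m" w] mult_left_mono[OF wX, of "norm (cstar (\<Delta> m) * a * \<Delta> m)"]
        by simp
    qed (use wX' X0' in auto)
    finally show ?thesis by (simp add: algebra_simps)
  qed
  have main: "cmod (cinner v' (\<Phi> a v)) \<le> norm (cstar (\<Delta> m) * a * \<Delta> m) * X * X' + 2 * na * sqrt g * X * X'"
  proof -
    have "cmod (cinner v' (\<Phi> a v)) \<le> cmod (cinner v' (\<Phi> (a * \<Delta> m) w)) + cmod (cinner v' (\<Phi> (a * \<Delta> m) w) - cinner v' (\<Phi> a v))"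
      using cmod_tri3[of "cinner v' (\<Phi> a v)" "cinner v' (\<Phi> (a * \<Delta> m) w)"]
      by (simp add: norm_minus_commute)
    moreover have "cmod (cinner v' (\<Phi> (a * \<Delta> m) w)) \<le> cmod (cinner w' (\<Phi> (cstar (\<Delta> m) * a * \<Delta> m) w)) +
        cmod (cinner w' (\<Phi> (cstar (\<Delta> m) * a * \<Delta> m) w) - cinner v' (\<Phi> (a * \<Delta> m) w))"
      using cmod_tri3[of "cinner v' (\<Phi> (a * \<Delta> m) w)" "cinner w' (\<Phi> (cstar (\<Delta> m) * a * \<Delta> m) w)"]
      by (simp add: norm_minus_commute)
    ultimately show ?thesis using s1 s2 s3 by (simp add: algebra_simps)
  qed
  have pw: "p *\<^sub>C w = v - d" "p *\<^sub>C w' = v' - d'" unfolding d_def d'_def by simp_all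
  have "(cmod p)\<^sup>2 * cmod (cinner w' (\<Phi> a w)) = cmod (cinner (p *\<^sub>C w') (\<Phi> a (p *\<^sub>C w)))"
  proof -
    have "cinner (p *\<^sub>C w') (\<Phi> a (p *\<^sub>C w)) = (cnj p * p) * cinner w' (\<Phi> a w)"
      by (simp add: UL cinner_scaleC_left cinner_scaleC_right)
    then show ?thesis by (simp add: norm_mult power2_eq_square)
  qed
  also have "cinner (p *\<^sub>C w') (\<Phi> a (p *\<^sub>C w)) =
      cinner v' (\<Phi> a v) - cinner v' (\<Phi> a d) - cinner d' (\<Phi> a v) + cinner d' (\<Phi> a d)"
    unfolding pw by (simp add: UL cinner_diff_left cinner_diff_right)
  also have "cmod (cinner v' (\<Phi> a v) - cinner v' (\<Phi> a d) - cinner d' (\<Phi> a v) + cinner d' (\<Phi> a d))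
      \<le> cmod (cinner v' (\<Phi> a v)) + cmod (cinner v' (\<Phi> a d)) + cmod (cinner d' (\<Phi> a v)) + cmod (cinner d' (\<Phi> a d))"
    by (rule order.trans[OF norm_triangle_ineq]) (auto intro!: add_mono norm_triangle_ineq4 order.trans[OF norm_triangle_ineq4])
  also have "\<dots> \<le> (norm (cstar (\<Delta> m) * a * \<Delta> m) * X * X' + 2 * na * sqrt g * X * X') + X' * (na * (e * X))
      + (e * X') * (na * X) + (e * X') * (na * (e * X))"
  proof (intro add_mono main)
    show "cmod (cinner v' (\<Phi> a d)) \<le> X' * (na * (e * X))"
      using bnd[of v' d] mono3[OF norm_ge_zero vX' norm_ge_zero dX na0] by linarith
    show "cmod (cinner d' (\<Phi> a v)) \<le> (e * X') * (na * X)"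
      using bnd[of d' v] mono3[OF norm_ge_zero dX' norm_ge_zero vX na0] by linarith
    show "cmod (cinner d' (\<Phi> a d)) \<le> (e * X') * (na * (e * X))"
      using bnd[of d' d] mono3[OF norm_ge_zero dX' norm_ge_zero dX na0] by linarith
  qed
  finally show ?thesis
    unfolding w_def[symmetric] w'_def[symmetric] p_def[symmetric] e_def[symmetric] g_def[symmetric]
      X_def[symmetric] X'_def[symmetric] na_def[symmetric]
    by (simp add: algebra_simps power2_eq_square)
qed


lemma P_facts:
  assumes A: "\<bar>cmod (\<psi> (\<Delta> m)) - 1\<bar> \<le> \<delta>" and d: "0 < \<delta>" "\<delta> < 1/4"
  shows "1/2 \<le> cmod (\<psi> (\<Delta> m))" "cmod (\<psi> (\<Delta> m)) \<le> 2" "\<bar>1 - (cmod (\<psi> (\<Delta> m)))\<^sup>2\<bar> \<le> 3 * \<delta>"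
    "1 - \<delta> \<le> cmod (\<psi> (\<Delta> m))" "1/2 \<le> (cmod (\<psi> (\<Delta> m)))\<^sup>2"
proof -
  define P where "P = cmod (\<psi> (\<Delta> m))"
  have A': "\<bar>P - 1\<bar> \<le> \<delta>" using A unfolding P_def .
  have a1: "P - 1 \<le> \<delta>" "1 - P \<le> \<delta>" using A' by (simp_all add: abs_le_iff)
  show "1/2 \<le> cmod (\<psi> (\<Delta> m))" "cmod (\<psi> (\<Delta> m)) \<le> 2" "1 - \<delta> \<le> cmod (\<psi> (\<Delta> m))"
    using a1 d unfolding P_def[symmetric] by linarith+
  have "1 - P\<^sup>2 = (1 - P) * (1 + P)" by (simp add: power2_eq_square algebra_simps)
  then have "\<bar>1 - P\<^sup>2\<bar> = \<bar>1 - P\<bar> * \<bar>1 + P\<bar>" by (simp only: abs_mult)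
  also have "\<dots> \<le> \<delta> * 3"
  proof (rule mult_mono)
    show "\<bar>1 - P\<bar> \<le> \<delta>" using a1 by (simp add: abs_le_iff)
    show "\<bar>1 + P\<bar> \<le> 3" using a1 d by (simp add: abs_le_iff)
  qed (use d in auto)
  finally have "\<bar>1 - P\<^sup>2\<bar> \<le> \<delta> * 3" .
  then show "\<bar>1 - (cmod (\<psi> (\<Delta> m)))\<^sup>2\<bar> \<le> 3 * \<delta>" unfolding P_def by simp
  have "3/4 \<le> P" using a1 d by linarith
  then have "(3/4)\<^sup>2 \<le> P\<^sup>2" by (intro power_mono) auto
  then show "1/2 \<le> (cmod (\<psi> (\<Delta> m)))\<^sup>2" unfolding P_def by (simp add: power2_eq_square)
qed

lemma e_g_facts:
  assumes A: "\<bar>cmod (\<psi> (\<Delta> m)) - 1\<bar> \<le> \<delta>" and d: "0 < \<delta>" "\<delta> < 1/4"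
    and C: "norm (cstar (\<Delta> n) * bb \<psi> \<Delta> m * \<Delta> n) < 6 * \<delta>"
  shows "ee \<psi> \<Delta> m n \<le> sqrt (6 * \<delta>)" "(ee \<psi> \<Delta> m n)\<^sup>2 \<le> 6 * \<delta>"
    "sqrt (gam \<psi> \<Delta> m n) \<le> sqrt (27 * \<delta> + 4 * sqrt (6 * \<delta>))"
proof -
  show e1: "ee \<psi> \<Delta> m n \<le> sqrt (6 * \<delta>)" unfolding ee_def using C by simp
  show e2: "(ee \<psi> \<Delta> m n)\<^sup>2 \<le> 6 * \<delta>" unfolding ee_def using C by simp
  have "gam \<psi> \<Delta> m n \<le> 3 * \<delta> + 4 * sqrt (6 * \<delta>) + 4 * (6 * \<delta>)"
    unfolding gam_def using P_facts(3)[OF A d] e1 e2 by linarith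
  then show "sqrt (gam \<psi> \<Delta> m n) \<le> sqrt (27 * \<delta> + 4 * sqrt (6 * \<delta>))" by simp
qed

lemma bound2:
  assumes A: "\<bar>cmod (\<psi> (\<Delta> m)) - 1\<bar> \<le> \<delta>" and d: "0 < \<delta>" "\<delta> < 1/4"
    and B: "norm (cstar (\<Delta> m) * a * \<Delta> m) \<le> \<delta>"
    and C: "norm (cstar (\<Delta> n) * bb \<psi> \<Delta> m * \<Delta> n) < 6 * \<delta>"
  shows "norm (\<Phi> (cstar (\<Delta> n)) (\<Phi> a (\<Phi> (\<Delta> n) \<xi>))) \<le> (2 * H2 (norm a) \<delta>) * norm \<xi>"
proof -
  note PF = P_facts[OF A d]
  note EF = e_g_facts[OF A d C]
  define P where "P = cmod (\<psi> (\<Delta> m))"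
  define e where "e = ee \<psi> \<Delta> m n"
  define na where "na = norm a"
  have na0: "0 \<le> na" unfolding na_def by simp
  have Bd: "na * (2 * e + e\<^sup>2) + 2 * na * sqrt (gam \<psi> \<Delta> m n) + norm (cstar (\<Delta> m) * a * \<Delta> m) \<le> H2 na \<delta>"
  proof -
    have "na * (2 * e + e\<^sup>2) \<le> na * (2 * sqrt (6 * \<delta>) + 6 * \<delta>)"
      using EF(1,2) na0 unfolding e_def by (intro mult_left_mono) auto
    moreover have "2 * na * sqrt (gam \<psi> \<Delta> m n) \<le> 2 * na * sqrt (27 * \<delta> + 4 * sqrt (6 * \<delta>))"
      using EF(3) na0 by (intro mult_left_mono) auto
    ultimately show ?thesis using B unfolding H2_def by linarith
  qed
  have H0: "0 \<le> H2 na \<delta>" unfolding H2_def using d na0 by simp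
  show ?thesis
  proof (rule norm_by_inner)
    show "0 \<le> 2 * H2 (norm a) \<delta> * norm \<xi>" using H0 unfolding na_def by simp
  next
    fix \<eta>
    have i: "cinner \<eta> (\<Phi> (cstar (\<Delta> n)) (\<Phi> a (\<Phi> (\<Delta> n) \<xi>))) = cinner (\<Phi> (\<Delta> n) \<eta>) (\<Phi> a (\<Phi> (\<Delta> n) \<xi>))"
      by (simp add: u_adj[OF u])
    define Z where "Z = cmod (cinner (\<Phi> (\<Delta> n) \<eta>) (\<Phi> a (\<Phi> (\<Delta> n) \<xi>)))"
    have Z0: "0 \<le> Z" unfolding Z_def by simp
    have "P\<^sup>2 * Z \<le> (na * (2 * e + e\<^sup>2) + 2 * na * sqrt (gam \<psi> \<Delta> m n) + norm (cstar (\<Delta> m) * a * \<Delta> m)) * norm \<xi> * norm \<eta>"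
      unfolding P_def Z_def e_def na_def by (rule core2[OF PF(1,2)])
    also have "\<dots> \<le> H2 na \<delta> * norm \<xi> * norm \<eta>"
      using Bd by (intro mult_right_mono) auto
    finally have "P\<^sup>2 * Z \<le> H2 na \<delta> * norm \<xi> * norm \<eta>" .
    moreover have "(1/2) * Z \<le> P\<^sup>2 * Z" using PF(5) Z0 unfolding P_def by (intro mult_right_mono) auto
    ultimately have "Z \<le> 2 * (H2 na \<delta> * norm \<xi> * norm \<eta>)" by linarith
    then show "cmod (cinner \<eta> (\<Phi> (cstar (\<Delta> n)) (\<Phi> a (\<Phi> (\<Delta> n) \<xi>)))) \<le> 2 * H2 (norm a) \<delta> * norm \<xi> * norm \<eta>"
      unfolding i Z_def[symmetric] na_def by (simp add: algebra_simps)
  qed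
qed

lemma norm_a_Delta: "norm (a * \<Delta> m) = sqrt (norm (cstar (\<Delta> m) * (cstar a * a) * \<Delta> m))"
proof -
  have "cstar (a * \<Delta> m) * (a * \<Delta> m) = cstar (\<Delta> m) * (cstar a * a) * \<Delta> m"
    by (simp add: cstar_mult mult.assoc)
  then have "(norm (a * \<Delta> m))\<^sup>2 = norm (cstar (\<Delta> m) * (cstar a * a) * \<Delta> m)"
    using cstar_identity[of "a * \<Delta> m"] by simp
  moreover have "sqrt ((norm (a * \<Delta> m))\<^sup>2) = norm (a * \<Delta> m)" by simp
  ultimately show ?thesis by simp
qed

lemma bound1:
  assumes A: "\<bar>cmod (\<psi> (\<Delta> m)) - 1\<bar> \<le> \<delta>" and d: "0 < \<delta>" "\<delta> < 1/4"
    and B: "norm (cstar (\<Delta> m) * (cstar a * a) * \<Delta> m) \<le> s + \<delta>"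
    and C: "norm (cstar (\<Delta> n) * bb \<psi> \<Delta> m * \<Delta> n) < 6 * \<delta>"
  shows "norm (\<Phi> a (\<Phi> (\<Delta> n) \<xi>)) \<le> H1 s (norm a) \<delta> * norm \<xi>"
proof -
  note PF = P_facts[OF A d]
  note EF = e_g_facts[OF A d C]
  define P where "P = cmod (\<psi> (\<Delta> m))"
  define na where "na = norm a"
  have na0: "0 \<le> na" unfolding na_def by simp
  have P0: "0 < 1 - \<delta>" "1 - \<delta> \<le> P" using PF(4) d unfolding P_def by auto
  define K where "K = sqrt (s + \<delta>) + na * sqrt (27 * \<delta> + 4 * sqrt (6 * \<delta>)) + na * sqrt (6 * \<delta>)"
  have Kb: "norm (a * \<Delta> m) + na * sqrt (gam \<psi> \<Delta> m n) + na * ee \<psi> \<Delta> m n \<le> K"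
  proof -
    have "norm (a * \<Delta> m) = sqrt (norm (cstar (\<Delta> m) * (cstar a * a) * \<Delta> m))" by (rule norm_a_Delta)
    also have "\<dots> \<le> sqrt (s + \<delta>)" using B by simp
    finally have "norm (a * \<Delta> m) \<le> sqrt (s + \<delta>)" .
    moreover have "na * sqrt (gam \<psi> \<Delta> m n) \<le> na * sqrt (27 * \<delta> + 4 * sqrt (6 * \<delta>))"
      using EF(3) na0 by (intro mult_left_mono) auto
    moreover have "na * ee \<psi> \<Delta> m n \<le> na * sqrt (6 * \<delta>)"
      using EF(1) na0 by (intro mult_left_mono) auto
    ultimately show ?thesis unfolding K_def by linarith
  qed
  have "P * norm (\<Phi> a (\<Phi> (\<Delta> n) \<xi>))
     \<le> (norm (a * \<Delta> m) + na * sqrt (gam \<psi> \<Delta> m n) + na * ee \<psi> \<Delta> m n) * norm \<xi>"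
    unfolding P_def na_def by (rule core1[OF PF(1,2)])
  also have "\<dots> \<le> K * norm \<xi>" using Kb by (intro mult_right_mono) auto
  finally have 1: "P * norm (\<Phi> a (\<Phi> (\<Delta> n) \<xi>)) \<le> K * norm \<xi>" .
  have "(1 - \<delta>) * norm (\<Phi> a (\<Phi> (\<Delta> n) \<xi>)) \<le> P * norm (\<Phi> a (\<Phi> (\<Delta> n) \<xi>))"
    using P0 by (intro mult_right_mono) auto
  with 1 have "(1 - \<delta>) * norm (\<Phi> a (\<Phi> (\<Delta> n) \<xi>)) \<le> K * norm \<xi>" by linarith
  then have "norm (\<Phi> a (\<Phi> (\<Delta> n) \<xi>)) \<le> K * norm \<xi> / (1 - \<delta>)"
    using P0(1) by (simp add: pos_le_divide_eq mult.commute)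
  moreover have "H1 s (norm a) \<delta> = K / (1 - \<delta>)" unfolding H1_def K_def na_def ..
  ultimately show ?thesis by simp
qed


lemma pmod_ev:
  assumes "\<delta> > 0"
  shows "eventually (\<lambda>m. \<bar>cmod (\<psi> (\<Delta> m)) - 1\<bar> \<le> \<delta>) sequentially"
proof -
  have lim: "(\<lambda>m. cmod (\<psi> (\<Delta> m))) \<longlonglongrightarrow> 1"
    using tendsto_norm[OF pconv] by simp
  have "eventually (\<lambda>m. 1 - \<delta> < cmod (\<psi> (\<Delta> m))) sequentially"
    by (rule order_tendstoD(1)[OF lim]) (use assms in simp)
  moreover have "eventually (\<lambda>m. cmod (\<psi> (\<Delta> m)) < 1 + \<delta>) sequentially"
    by (rule order_tendstoD(2)[OF lim]) (use assms in simp)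
  ultimately show ?thesis by eventually_elim (simp add: abs_le_iff)
qed

lemma limsup_ev:
  assumes "cmod (\<psi> b) < c"
  shows "eventually (\<lambda>m. norm (cstar (\<Delta> m) * b * \<Delta> m) < c) sequentially"
proof -
  have "ereal (cmod (\<psi> b)) < ereal c" using assms by simp
  with climsup[of b] have "limsup (\<lambda>n. ereal (norm (cstar (\<Delta> n) * b * \<Delta> n))) < ereal c"
    by (rule le_less_trans)
  then show ?thesis by (auto dest: Limsup_lessD)
qed

lemma main2:
  assumes psa: "\<psi> a = 0"
  shows "(\<lambda>n. onorm (hadj (\<pi> (\<Delta> n)) \<circ> \<Phi> a \<circ> \<pi> (\<Delta> n))) \<longlonglongrightarrow> 0"
proof (rule LIMSEQ_I)
  fix r :: real assume r: "0 < r"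
  have opeq: "hadj (\<pi> (\<Delta> n)) \<circ> \<Phi> a \<circ> \<pi> (\<Delta> n) = (\<lambda>\<xi>. \<Phi> (cstar (\<Delta> n)) (\<Phi> a (\<Phi> (\<Delta> n) \<xi>)))" for n
  proof -
    have "hadj (\<pi> (\<Delta> n)) = \<pi> (cstar (\<Delta> n))" by (rule rep_star[OF rep, symmetric])
    also have "\<dots> = \<Phi> (cstar (\<Delta> n))" by (rule agreeS[OF S_cstar]) (use DS in blast)
    finally show ?thesis using agreeS[of "\<Delta> n"] DS by (auto simp: o_def)
  qed
  obtain \<delta> where d: "0 < \<delta>" "\<delta> < 1/4" "H2 (norm a) \<delta> < 0 + r / 4"
    using choose_delta[OF H2_lim, of "r/4"] r by auto
  have "eventually (\<lambda>m. \<bar>cmod (\<psi> (\<Delta> m)) - 1\<bar> \<le> \<delta> \<and> norm (cstar (\<Delta> m) * a * \<Delta> m) < \<delta>) sequentially"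
    using pmod_ev[OF d(1)] limsup_ev[of a \<delta>] psa d(1) by (auto intro: eventually_conj)
  then obtain m where m: "\<bar>cmod (\<psi> (\<Delta> m)) - 1\<bar> \<le> \<delta>" "norm (cstar (\<Delta> m) * a * \<Delta> m) < \<delta>"
    unfolding eventually_sequentially by blast
  have "1 - (cmod (\<psi> (\<Delta> m)))\<^sup>2 < 6 * \<delta>" using P_facts(3)[OF m(1) d(1,2)] d(1) by linarith
  then have "eventually (\<lambda>n. norm (cstar (\<Delta> n) * bb \<psi> \<Delta> m * \<Delta> n) < 6 * \<delta>) sequentially"
    by (rule e_eventually)
  then obtain N where N: "\<And>n. n \<ge> N \<Longrightarrow> norm (cstar (\<Delta> n) * bb \<psi> \<Delta> m * \<Delta> n) < 6 * \<delta>"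
    unfolding eventually_sequentially by blast
  have H0: "0 \<le> H2 (norm a) \<delta>" unfolding H2_def using d by simp
  show "\<exists>no. \<forall>n\<ge>no. norm (onorm (hadj (\<pi> (\<Delta> n)) \<circ> \<Phi> a \<circ> \<pi> (\<Delta> n)) - 0) < r"
  proof (intro exI allI impI)
    fix n assume n: "N \<le> n"
    have bd: "norm (\<Phi> (cstar (\<Delta> n)) (\<Phi> a (\<Phi> (\<Delta> n) \<xi>))) \<le> (2 * H2 (norm a) \<delta>) * norm \<xi>" for \<xi>
      by (rule bound2[OF m(1) d(1,2) less_imp_le[OF m(2)] N[OF n]])
    have "onorm (\<lambda>\<xi>. \<Phi> (cstar (\<Delta> n)) (\<Phi> a (\<Phi> (\<Delta> n) \<xi>))) \<le> 2 * H2 (norm a) \<delta>"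
      by (rule onorm_bound) (use H0 bd in auto)
    moreover have "0 \<le> onorm (\<lambda>\<xi>. \<Phi> (cstar (\<Delta> n)) (\<Phi> a (\<Phi> (\<Delta> n) \<xi>)))"
      by (rule onorm_nonneg_bound[OF bd])
    ultimately show "norm (onorm (hadj (\<pi> (\<Delta> n)) \<circ> \<Phi> a \<circ> \<pi> (\<Delta> n)) - 0) < r"
      unfolding opeq using d(3) by simp
  qed
qed

lemma main1:
  "limsup (\<lambda>n. ereal (onorm (\<Phi> a \<circ> \<pi> (\<Delta> n)))) \<le> ereal (sqrt (Re (\<psi> (cstar a * a))))"
proof (rule ereal_le_epsilon2)
  fix \<epsilon> :: real assume eps: "0 < \<epsilon>"
  define s where "s = Re (\<psi> (cstar a * a))"
  have s0: "0 \<le> s" unfolding s_def by (rule st_pos[OF st])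
  have cs_s: "cmod (\<psi> (cstar a * a)) = s"
    unfolding s_def using st_pos[OF st, of a] by (simp add: cmod_def)
  have opeq: "\<Phi> a \<circ> \<pi> (\<Delta> n) = (\<lambda>\<xi>. \<Phi> a (\<Phi> (\<Delta> n) \<xi>))" for n
    using agreeS[of "\<Delta> n"] DS by (auto simp: o_def)
  obtain \<delta> where d: "0 < \<delta>" "\<delta> < 1/4" "H1 s (norm a) \<delta> < sqrt s + \<epsilon>"
    using choose_delta[OF H1_lim[OF s0], of \<epsilon>] eps by auto
  have "eventually (\<lambda>m. \<bar>cmod (\<psi> (\<Delta> m)) - 1\<bar> \<le> \<delta> \<and>
      norm (cstar (\<Delta> m) * (cstar a * a) * \<Delta> m) < s + \<delta>) sequentially"
    using pmod_ev[OF d(1)] limsup_ev[of "cstar a * a" "s + \<delta>"] cs_s d(1) by (auto intro: eventually_conj)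
  then obtain m where m: "\<bar>cmod (\<psi> (\<Delta> m)) - 1\<bar> \<le> \<delta>" "norm (cstar (\<Delta> m) * (cstar a * a) * \<Delta> m) < s + \<delta>"
    unfolding eventually_sequentially by blast
  have "1 - (cmod (\<psi> (\<Delta> m)))\<^sup>2 < 6 * \<delta>" using P_facts(3)[OF m(1) d(1,2)] d(1) by linarith
  then have ev: "eventually (\<lambda>n. norm (cstar (\<Delta> n) * bb \<psi> \<Delta> m * \<Delta> n) < 6 * \<delta>) sequentially"
    by (rule e_eventually)
  have H0: "0 \<le> H1 s (norm a) \<delta>" unfolding H1_def using d s0 by simp
  have "eventually (\<lambda>n. ereal (onorm (\<Phi> a \<circ> \<pi> (\<Delta> n))) \<le> ereal (sqrt s + \<epsilon>)) sequentially"
    using ev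
  proof eventually_elim
    case (elim n)
    have bd: "norm (\<Phi> a (\<Phi> (\<Delta> n) \<xi>)) \<le> H1 s (norm a) \<delta> * norm \<xi>" for \<xi>
      by (rule bound1[OF m(1) d(1,2) less_imp_le[OF m(2)] elim])
    have "onorm (\<lambda>\<xi>. \<Phi> a (\<Phi> (\<Delta> n) \<xi>)) \<le> H1 s (norm a) \<delta>"
      by (rule onorm_bound) (use H0 bd in auto)
    then show ?case unfolding opeq using d(3) by simp
  qed
  then have "limsup (\<lambda>n. ereal (onorm (\<Phi> a \<circ> \<pi> (\<Delta> n)))) \<le> ereal (sqrt s + \<epsilon>)"
    by (rule Limsup_bounded)
  then show "limsup (\<lambda>n. ereal (onorm (\<Phi> a \<circ> \<pi> (\<Delta> n)))) \<le> ereal (sqrt (Re (\<psi> (cstar a * a)))) + ereal \<epsilon>"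
    unfolding s_def by simp
qed

end

theorem lemma5p1:
  fixes S :: "'a::cstar_algebra set"
    and \<pi> \<Phi> :: "'a \<Rightarrow> ('h::chilbert \<Rightarrow> 'h)"
    and \<psi> :: "'a \<Rightarrow> complex"
    and \<Delta> :: "nat \<Rightarrow> 'a"
  assumes "operator_system S"
    and "unital_star_rep \<pi>"
    and "ucp \<Phi>"
    and "\<forall>x\<in>S. \<Phi> x = \<pi> x"
    and "cstate \<psi>"
    and "characteristic_sequence \<psi> \<Delta>"
    and "\<forall>n. \<Delta> n \<in> S"
  shows "(\<forall>a. limsup (\<lambda>n. ereal (onorm (\<Phi> a \<circ> \<pi> (\<Delta> n))))
              \<le> ereal (sqrt (Re (\<psi> (cstar a * a))))) \<and>
         (\<forall>a. cstar a = a \<and> \<psi> a = 0 \<longrightarrow>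
           (\<lambda>n. onorm (hadj (\<pi> (\<Delta> n)) \<circ> \<Phi> a \<circ> \<pi> (\<Delta> n))) \<longlonglongrightarrow> 0)"
  using main1[OF assms] main2[OF assms] by blast


end
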